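(* Let $\mathcal{G}(t)$ be a matrix-weighted switching network satisfying Assumption 1 (described in the context), and consider $\dot{\boldsymbol{x}}(t)=-L(t)\boldsymbol{x}(t)$, $\boldsymbol{x}(t)\in\mathbb{R}^{dn}$. Let $\Psi=[\boldsymbol{\varphi}_1,\dots,\boldsymbol{\varphi}_m]\in\mathbb{R}^{d\times m}$ have mutually orthogonal unit columns, and let $C=\mathrm{diag}(\sigma_1,\dots,\sigma_n)\in\mathbb{R}^{dn\times dn}$ with each $\sigma_i\in\{I_d,-I_d\}$. Suppose there exist a subsequence $\{t_{k_l}\}_{l\in\mathbb{N}}$ of $\{t_k\}$ with $t_{k_0}=t_0$ and $\Delta t_{k_l}=t_{k_{l+1}}-t_{k_l}<\infty$, and a scalar $q\in(0,1)$, such that for all $l\in\mathbb{N}$, $\mathrm{null}(\widetilde{L}_{[t_{k_l},t_{k_{l+1}})})$ equals the column space of $C(\boldsymbol{1}_n\otimes\Psi)$ and $\mu_{m+1}\big(\Phi(t_{k_{l+1}},t_{k_l})^\top\Phi(t_{k_{l+1}},t_{k_l})\big)\le q$. Then the system admits bipartite consensus, and the bipartite consensus value is $$\boldsymbol{x}^*=C\Big(\boldsymbol{1}_n\otimes\Big(\tfrac{1}{n}\Psi(\boldsymbol{1}_n^\top\otimes\Psi^\top)C\boldsymbol{x}(t_0)\Big)\Big).$$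
   Context: A matrix-weighted switching network $\mathcal{G}(t)=(\mathcal{V},\mathcal{E}(t),A(t))$ has node set $\mathcal{V}=\{1,\dots,n\}$, $n>1$; each edge $(i,j)\in\mathcal{E}(t)$ carries a symmetric weight $A_{ij}(t)\in\mathbb{R}^{d\times d}$ which is either positive (semi-)definite or negative (semi-)definite, with $A_{ij}=A_{ji}$, $A_{ii}=0$, $A_{ij}(t)=0$ if $(i,j)\notin\mathcal{E}(t)$; standing assumption: for each pair $(i,j)$ the weight $A_{ij}(t)$ has the same sign type for all $t$. Set $|A_{ij}|=A_{ij}$ if $A_{ij}\succeq0$ and $-A_{ij}$ if $A_{ij}\preceq0$; $\mathrm{sgn}(A)$ is $1$, $-1$, $0$ for nonzero PSD, nonzero NSD, zero $A$. With $A=[A_{ij}]\in\mathbb{R}^{dn\times dn}$ and $D=\mathrm{diag}(D_1,\dots,D_n)$, $D_i=\sum_{j:(i,j)\in\mathcal{E}}|A_{ij}|$, the matrix-valued Laplacian is $L=D-A$; $\dot{\boldsymbol{x}}=-L(t)\boldsymbol{x}$ is the stacked form of $\dot{\boldsymbol{x}}_i=-\sum_j|A_{ij}|(\boldsymbol{x}_i-\mathrm{sgn}(A_{ij})\boldsymbol{x}_j)$. The initial time is $t_0=0$. Assumption 1: there is a sequence $\{t_k\}_{k\in\mathbb{N}}$ with $t_0=0$, $t_k\to\infty$, $t_{k+1}-t_k\ge\alpha>0$, and $\mathcal{G}(t)$ is constant on each $[t_k,t_{k+1})$, with Laplacian $L^k$ there and $\Delta t_k=t_{k+1}-t_k$.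 For $k'<k''$: $\widetilde{L}_{[t_{k'},t_{k''})}=\frac{1}{t_{k''}-t_{k'}}\int_{t_{k'}}^{t_{k''}}L(t)dt$, and $\Phi(t_{k''},t_{k'})=e^{-L^{k''-1}\Delta t_{k''-1}}\cdots e^{-L^{k'}\Delta t_{k'}}$; $\mu_{m+1}(P)$ denotes the $(m+1)$-th largest eigenvalue of the symmetric matrix $P$. Bipartite consensus: cluster consensus with exactly two clusters, i.e. all limits $\lim_{t\to\infty}\boldsymbol{x}_i(t)$ exist and there is a partition of $\mathcal{V}$ into two parts such that agents in the same part have equal limits and agents in different parts have different limits. *)

theory Defs
  imports "HOL-Analysis.Analysis" "HOL-Computational_Algebra.Polynomial"
begin

(* Agents (nodes) are indexed by a finite type 'n, vector components by a finite type 'd.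
   The stacked state vector x in R^{dn} is indexed by pairs (i,a) :: 'n \<times> 'd
   (agent i, component a), so x_i = (\<chi> a. x $ (i,a)). *)

type_synonym ('n,'d) stvec = "real ^ ('n \<times> 'd)"
type_synonym ('n,'d) stmat = "real ^ ('n \<times> 'd) ^ ('n \<times> 'd)"

definition psd :: "real^'d^'d \<Rightarrow> bool" where
  "psd M \<longleftrightarrow> (\<forall>v. 0 \<le> v \<bullet> (M *v v))"

definition nsd :: "real^'d^'d \<Rightarrow> bool" where
  "nsd M \<longleftrightarrow> (\<forall>v. v \<bullet> (M *v v) \<le> 0)"

definition mabs :: "real^'d^'d \<Rightarrow> real^'d^'d" where
  "mabs M = (if psd M then M else - M)"

text \<open>Matrix-valued Laplacian L = D - A of the weights W (block (i,j) is
  [i=j] D_i - W i j with D_i = sum_j |W i j|).\<close>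
definition laplacian :: "('n::finite \<Rightarrow> 'n \<Rightarrow> real^'d^'d) \<Rightarrow> ('n,'d::finite) stmat" where
  "laplacian W = (\<chi> p q. (case p of (i,a) \<Rightarrow> case q of (j,b) \<Rightarrow>
      (if i = j then (\<Sum>k\<in>UNIV. mabs (W i k)) $ a $ b else 0) - W i j $ a $ b))"

fun matpow :: "real^'k^'k \<Rightarrow> nat \<Rightarrow> real^'k^'k" where
  "matpow M 0 = mat 1"
| "matpow M (Suc k) = M ** matpow M k"

definition mexp :: "real^'k^'k \<Rightarrow> real^'k^'k" where
  "mexp M = (\<Sum>k. (1 / fact k) *\<^sub>R matpow M k)"

text \<open>Phi(t_{k'+j}, t_{k'}) = e^{-L^{k'+j-1} Dt_{k'+j-1}} ... e^{-L^{k'} Dt_{k'}},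
  where Lk k is the Laplacian on [t_k, t_{k+1}).\<close>
fun trans_mat :: "(nat \<Rightarrow> real^'k^'k) \<Rightarrow> (nat \<Rightarrow> real) \<Rightarrow> nat \<Rightarrow> nat \<Rightarrow> real^'k^'k" where
  "trans_mat Lk tk k' 0 = mat 1"
| "trans_mat Lk tk k' (Suc j) =
     mexp (- ((tk (k' + j + 1) - tk (k' + j)) *\<^sub>R Lk (k' + j))) ** trans_mat Lk tk k' j"

definition Phi :: "(nat \<Rightarrow> real^'k^'k) \<Rightarrow> (nat \<Rightarrow> real) \<Rightarrow> nat \<Rightarrow> nat \<Rightarrow> real^'k^'k" where
  "Phi Lk tk k'' k' = trans_mat Lk tk k' (k'' - k')"

definition avg_lap :: "(real \<Rightarrow> real^'k^'k) \<Rightarrow> real \<Rightarrow> real \<Rightarrow> real^'k^'k" where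
  "avg_lap L a b = (1 / (b - a)) *\<^sub>R integral {a..b} L"

definition null_space :: "real^'c^'r \<Rightarrow> (real^'c) set" where
  "null_space M = {v. M *v v = 0}"

definition col_space :: "real^'c^'r \<Rightarrow> (real^'r) set" where
  "col_space M = range (\<lambda>y. M *v y)"

text \<open>Characteristic polynomial det(xI - P) and eigenvalues listed in
  non-increasing order with multiplicity; mu j P = j-th largest eigenvalue (j \<ge> 1).\<close>
definition charpoly :: "real^'k^'k \<Rightarrow> real poly" where
  "charpoly P = det (\<chi> i j. (if i = j then [:0, 1:] else 0) - [:P $ i $ j:])"

definition eigs_desc :: "real^'k^'k \<Rightarrow> real list" where
  "eigs_desc P = rev (sorted_list_of_multiset (proots (charpoly P)))"

definition mu :: "nat \<Rightarrow> real^'k^'k \<Rightarrow> real" where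
  "mu j P = eigs_desc P ! (j - 1)"

definition ones_kron :: "real^'c^'d \<Rightarrow> real^'c^('n::finite \<times> 'd::finite)" where
  "ones_kron M = (\<chi> p c. M $ snd p $ c)"

definition ones_kron_vec :: "real^'d \<Rightarrow> real^('n::finite \<times> 'd::finite)" where
  "ones_kron_vec v = (\<chi> p. v $ snd p)"

definition sign_diag :: "('n::finite \<Rightarrow> real) \<Rightarrow> ('n,'d::finite) stmat" where
  "sign_diag s = (\<chi> p q. if p = q then s (fst p) else 0)"

definition agent :: "real^('n::finite \<times> 'd::finite) \<Rightarrow> 'n \<Rightarrow> real^'d" where
  "agent v i = (\<chi> a. v $ (i,a))"

definition bipartite_consensus :: "(real \<Rightarrow> real^('n::finite \<times> 'd::finite)) \<Rightarrow> bool" where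
  "bipartite_consensus x \<longleftrightarrow>
     (\<forall>i. \<exists>\<xi>. ((\<lambda>t. agent (x t) i) \<longlongrightarrow> \<xi>) at_top) \<and>
     (\<exists>S. S \<noteq> {} \<and> S \<noteq> UNIV \<and>
        (\<forall>i j. (i \<in> S \<longleftrightarrow> j \<in> S) \<longrightarrow>
               Lim at_top (\<lambda>t. agent (x t) i) = Lim at_top (\<lambda>t. agent (x t) j)) \<and>
        (\<forall>i j. (i \<in> S) \<noteq> (j \<in> S) \<longrightarrow>
               Lim at_top (\<lambda>t. agent (x t) i) \<noteq> Lim at_top (\<lambda>t. agent (x t) j)))"

end

theory Submission
  imports Defs
begin

lemma sum_pairs: "(\<Sum>p\<in>(UNIV::('a::finite\<times>'b::finite) set). f p) = (\<Sum>i\<in>UNIV. \<Sum>a\<in>UNIV. f (i,a))"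
  by (simp add: UNIV_Times_UNIV[symmetric] sum.cartesian_product del: UNIV_Times_UNIV)

lemma sum_if_helper:
  fixes X Y :: "'a::finite \<Rightarrow> 'b::finite \<Rightarrow> real"
  shows "(\<Sum>j\<in>UNIV. \<Sum>b\<in>UNIV. ((if i = j then X j b else 0) - Y j b)) = (\<Sum>b\<in>UNIV. X i b) - (\<Sum>j\<in>UNIV. \<Sum>b\<in>UNIV. Y j b)"
proof -
  have "(\<Sum>j\<in>UNIV. \<Sum>b\<in>UNIV. (if i = j then X j b else 0)) = (\<Sum>j\<in>UNIV. if i = j then (\<Sum>b\<in>UNIV. X j b) else 0)"
    by (intro sum.cong) auto
  also have "\<dots> = (\<Sum>b\<in>UNIV. X i b)" by (simp add: sum.delta)
  finally show ?thesis by (simp add: sum_subtractf)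
qed

lemma lap_quad:
  fixes W :: "'n::finite \<Rightarrow> 'n \<Rightarrow> real^'d::finite^'d"
  shows "v \<bullet> (laplacian W *v w) =
     (\<Sum>i\<in>UNIV. \<Sum>j\<in>UNIV. agent v i \<bullet> (mabs (W i j) *v agent w i) - agent v i \<bullet> (W i j *v agent w j))"
proof -
  have "v \<bullet> (laplacian W *v w) = (\<Sum>i\<in>UNIV. \<Sum>a\<in>UNIV. v $ (i,a) * (\<Sum>j\<in>UNIV. \<Sum>b\<in>UNIV.
      ((if i = j then (\<Sum>k\<in>UNIV. mabs (W i k)) $ a $ b * w $ (j,b) else 0) - W i j $ a $ b * w $ (j,b))))"
    by (simp add: inner_vec_def matrix_vector_mult_def laplacian_def sum_pairs left_diff_distrib if_distrib if_distribR cong: if_cong)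
  also have "\<dots> = (\<Sum>i\<in>UNIV. \<Sum>a\<in>UNIV. v $ (i,a) * ((\<Sum>b\<in>UNIV. (\<Sum>k\<in>UNIV. mabs (W i k)) $ a $ b * w $ (i,b))
      - (\<Sum>j\<in>UNIV. \<Sum>b\<in>UNIV. W i j $ a $ b * w $ (j,b))))"
    by (subst sum_if_helper) simp
  also have "\<dots> = (\<Sum>i\<in>UNIV. \<Sum>j\<in>UNIV. agent v i \<bullet> (mabs (W i j) *v agent w i) - agent v i \<bullet> (W i j *v agent w j))"
  proof -
    have e1: "(\<Sum>a\<in>UNIV. v $ (i,a) * (\<Sum>b\<in>UNIV. (\<Sum>k\<in>UNIV. mabs (W i k) $ a $ b) * w $ (i,b)))
       = (\<Sum>j\<in>UNIV. agent v i \<bullet> (mabs (W i j) *v agent w i))" for i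
    proof -
      have "(\<Sum>a\<in>UNIV. v $ (i,a) * (\<Sum>b\<in>UNIV. (\<Sum>k\<in>UNIV. mabs (W i k) $ a $ b) * w $ (i,b)))
         = (\<Sum>a\<in>UNIV. \<Sum>b\<in>UNIV. \<Sum>k\<in>UNIV. v $ (i,a) * (mabs (W i k) $ a $ b * w $ (i,b)))"
        by (simp add: sum_component sum_distrib_left sum_distrib_right mult.assoc)
      also have "\<dots> = (\<Sum>a\<in>UNIV. \<Sum>k\<in>UNIV. \<Sum>b\<in>UNIV. v $ (i,a) * (mabs (W i k) $ a $ b * w $ (i,b)))"
        by (rule sum.cong[OF refl], rule sum.swap)
      also have "\<dots> = (\<Sum>k\<in>UNIV. \<Sum>a\<in>UNIV. \<Sum>b\<in>UNIV. v $ (i,a) * (mabs (W i k) $ a $ b * w $ (i,b)))"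
        by (rule sum.swap)
      also have "\<dots> = (\<Sum>j\<in>UNIV. agent v i \<bullet> (mabs (W i j) *v agent w i))"
        by (simp add: inner_vec_def matrix_vector_mult_def agent_def sum_distrib_left)
      finally show ?thesis .
    qed
    have e2: "(\<Sum>a\<in>UNIV. v $ (i,a) * (\<Sum>j\<in>UNIV. \<Sum>b\<in>UNIV. W i j $ a $ b * w $ (j,b)))
       = (\<Sum>j\<in>UNIV. agent v i \<bullet> (W i j *v agent w j))" for i
    proof -
      have "(\<Sum>a\<in>UNIV. v $ (i,a) * (\<Sum>j\<in>UNIV. \<Sum>b\<in>UNIV. W i j $ a $ b * w $ (j,b)))
         = (\<Sum>a\<in>UNIV. \<Sum>j\<in>UNIV. \<Sum>b\<in>UNIV. v $ (i,a) * (W i j $ a $ b * w $ (j,b)))"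
        by (simp add: sum_distrib_left)
      also have "\<dots> = (\<Sum>j\<in>UNIV. \<Sum>a\<in>UNIV. \<Sum>b\<in>UNIV. v $ (i,a) * (W i j $ a $ b * w $ (j,b)))"
        by (rule sum.swap)
      also have "\<dots> = (\<Sum>j\<in>UNIV. agent v i \<bullet> (W i j *v agent w j))"
        by (simp add: inner_vec_def matrix_vector_mult_def agent_def sum_distrib_left)
      finally show ?thesis .
    qed
    show ?thesis
      by (simp add: right_diff_distrib sum_subtractf e1 e2)
  qed
  finally show ?thesis .
qed

lemma matvec_neg: "(- M) *v (a::real^'k::finite) = - (M *v a)"
  by (simp add: vec_eq_iff matrix_vector_mult_def sum_negf)

lemma quad_sym:
  fixes M :: "real^'k::finite^'k"
  assumes "transpose M = M"
  shows "u \<bullet> (M *v w) = w \<bullet> (M *v u)"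
proof -
  have "u \<bullet> (M *v w) = (u v* M) \<bullet> w" by (simp add: dot_lmul_matrix)
  also have "\<dots> = (transpose M *v u) \<bullet> w" by (simp add: transpose_matrix_vector)
  finally show ?thesis using assms by (simp add: inner_commute)
qed

lemma transpose_mabs:
  fixes M :: "real^'k::finite^'k"
  assumes "transpose M = M"
  shows "transpose (mabs M) = mabs M"
  using assms by (auto simp: mabs_def transpose_def vec_eq_iff)

lemma psd_term:
  fixes M :: "real^'k::finite^'k"
  assumes sym: "transpose M = M" and pn: "psd M \<or> nsd M"
  shows "0 \<le> a \<bullet> (mabs M *v a) + b \<bullet> (mabs M *v b) - 2 * (a \<bullet> (M *v b))"
proof (cases "psd M")
  case True
  then have "0 \<le> (a - b) \<bullet> (M *v (a - b))" by (simp add: psd_def)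
  also have "(a - b) \<bullet> (M *v (a - b)) = a \<bullet> (M *v a) + b \<bullet> (M *v b) - 2 * (a \<bullet> (M *v b))"
    using quad_sym[OF sym, of b a]
    by (simp add: matrix_vector_mult_diff_distrib inner_diff_left inner_diff_right)
  finally show ?thesis using True by (simp add: mabs_def)
next
  case False
  then have "nsd M" using pn by simp
  then have "(a + b) \<bullet> (M *v (a + b)) \<le> 0" by (simp add: nsd_def)
  moreover have "(a + b) \<bullet> (M *v (a + b)) = a \<bullet> (M *v a) + b \<bullet> (M *v b) + 2 * (a \<bullet> (M *v b))"
    using quad_sym[OF sym, of b a]
    by (simp add: matrix_vector_right_distrib inner_add_left inner_add_right)
  ultimately show ?thesis using False
    by (simp add: mabs_def matvec_neg)
qed

lemma lap_psd:
  fixes W :: "'n::finite \<Rightarrow> 'n \<Rightarrow> real^'d::finite^'d"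
  assumes sym: "\<And>i j. transpose (W i j) = W i j"
    and sg: "\<And>i j. W i j = W j i"
    and pn: "\<And>i j. psd (W i j) \<or> nsd (W i j)"
  shows "0 \<le> v \<bullet> (laplacian W *v v)"
proof -
  define f where "f i j = agent v i \<bullet> (mabs (W i j) *v agent v i) - agent v i \<bullet> (W i j *v agent v j)" for i j
  have T: "v \<bullet> (laplacian W *v v) = (\<Sum>i\<in>UNIV. \<Sum>j\<in>UNIV. f i j)"
    by (simp add: lap_quad f_def)
  also have "\<dots> = (\<Sum>i\<in>UNIV. \<Sum>j\<in>UNIV. f j i)" by (rule sum.swap)
  finally have T2: "v \<bullet> (laplacian W *v v) = (\<Sum>i\<in>UNIV. \<Sum>j\<in>UNIV. f j i)" .
  have "0 \<le> (\<Sum>i\<in>UNIV. \<Sum>j\<in>UNIV. f i j + f j i)"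
  proof (intro sum_nonneg)
    fix i j
    have "f j i = agent v j \<bullet> (mabs (W i j) *v agent v j) - agent v i \<bullet> (W i j *v agent v j)"
      unfolding f_def using sg[of j i] quad_sym[OF sym[of i j], of "agent v j" "agent v i"] by simp
    then show "0 \<le> f i j + f j i"
      using psd_term[OF sym[of i j] pn[of i j], of "agent v i" "agent v j"] by (simp add: f_def)
  qed
  also have "\<dots> = 2 * (v \<bullet> (laplacian W *v v))"
    by (simp add: sum.distrib T T2[symmetric])
  finally show ?thesis by simp
qed

lemma lap_sym:
  fixes W :: "'n::finite \<Rightarrow> 'n \<Rightarrow> real^'d::finite^'d"
  assumes sym: "\<And>i j. transpose (W i j) = W i j"
    and sg: "\<And>i j. W i j = W j i"
  shows "transpose (laplacian W) = laplacian W"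
proof -
  have tm: "mabs (W i k) $ b $ a = mabs (W i k) $ a $ b" for i k a b
  proof -
    have "transpose (mabs (W i k)) $ a $ b = mabs (W i k) $ a $ b" using transpose_mabs[OF sym[of i k]] by simp
    then show ?thesis by (simp add: transpose_def)
  qed
  have tw: "W j i $ b $ a = W i j $ a $ b" for i j a b
  proof -
    have "transpose (W i j) $ a $ b = W i j $ a $ b" using sym[of i j] by simp
    then show ?thesis using sg[of j i] by (simp add: transpose_def)
  qed
  show ?thesis
    unfolding vec_eq_iff
  proof (intro allI)
    fix p q :: "'n \<times> 'd"
    obtain i a where p: "p = (i,a)" by force
    obtain j b where q: "q = (j,b)" by force
    show "transpose (laplacian W) $ p $ q = laplacian W $ p $ q"
      unfolding p q transpose_def laplacian_def
      by (simp add: sum_component tm tw)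
  qed
qed

lemma psd_null:
  fixes M :: "real^'k::finite^'k"
  assumes sym: "transpose M = M" and pos: "\<And>u. 0 \<le> u \<bullet> (M *v u)" and z: "v \<bullet> (M *v v) = 0"
  shows "M *v v = 0"
proof -
  define w where "w = M *v v"
  define c where "c = w \<bullet> (M *v v)"
  define d where "d = w \<bullet> (M *v w)"
  have d0: "0 \<le> d" using pos by (simp add: d_def)
  have key: "0 \<le> 2 * t * c + t^2 * d" for t
  proof -
    have "0 \<le> (v + t *\<^sub>R w) \<bullet> (M *v (v + t *\<^sub>R w))" by (rule pos)
    also have "\<dots> = v \<bullet> (M *v v) + t * (v \<bullet> (M *v w)) + t * (w \<bullet> (M *v v)) + t^2 * d"
      by (simp add: matrix_vector_right_distrib inner_add_left inner_add_right matrix_vector_mult_scaleR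
          d_def power2_eq_square algebra_simps)
    also have "\<dots> = 2 * t * c + t^2 * d"
      using quad_sym[OF sym, of v w] z by (simp add: c_def)
    finally show ?thesis .
  qed
  have "c = 0"
  proof (rule ccontr)
    assume "c \<noteq> 0"
    define e where "e = d + 1"
    have e0: "e > 0" "e \<noteq> 0" using d0 by (auto simp: e_def)
    define t where "t = - c / e"
    have "2 * t * c + t^2 * d = - (c^2 * (e + 1)) / e^2"
    proof -
      have dE: "d = e - 1" by (simp add: e_def)
      show ?thesis using e0 unfolding t_def dE by (simp add: field_simps power2_eq_square)
    qed
    also have "\<dots> < 0" using e0 \<open>c \<noteq> 0\<close>
      by (intro divide_neg_pos) (auto intro!: mult_pos_pos)
    finally show False using key[of t] by simp
  qed
  then show ?thesis by (simp add: c_def w_def)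
qed

lemma matpow_vec_Suc: "matpow M (Suc n) *v v = M *v (matpow M n *v v)"
  by (simp add: matrix_vector_mul_assoc)

lemma matvec_bound: fixes M :: "real^'k::finite^'j::finite" obtains K :: real where "K > 0" "\<And>v. norm (M *v v) \<le> K * norm v"
proof -
  from bounded_linear.pos_bounded[OF matrix_vector_mul_bounded_linear[of M]]
  obtain K where "K > 0" "\<And>v. norm (M *v v) \<le> norm v * K" by blast
  then show ?thesis using that by (metis mult.commute)
qed

lemma matpow_bound:
  assumes K: "K \<ge> 0" "\<And>v. norm (M *v v) \<le> K * norm v"
  shows "norm (matpow M n *v v) \<le> K ^ n * norm v"
proof (induction n)
  case 0
  then show ?case by simp
next
  case (Suc n)
  have "norm (matpow M (Suc n) *v v) \<le> K * norm (matpow M n *v v)"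
    by (subst matpow_vec_Suc) (rule K(2))
  also have "\<dots> \<le> K * (K ^ n * norm v)" using Suc K(1) by (intro mult_left_mono) auto
  finally show ?case by (simp add: mult.assoc)
qed

lemma norm_mat_le: "norm (A::real^'k::finite^'j::finite) \<le> (\<Sum>i\<in>UNIV. \<Sum>j\<in>UNIV. \<bar>A$i$j\<bar>)"
proof -
  have "norm A = L2_set (\<lambda>i. norm (A$i)) UNIV" by (simp add: norm_vec_def)
  also have "\<dots> \<le> (\<Sum>i\<in>UNIV. norm (A$i))" by (rule L2_set_le_sum) auto
  also have "\<dots> \<le> (\<Sum>i\<in>UNIV. \<Sum>j\<in>UNIV. \<bar>A$i$j\<bar>)" by (intro sum_mono norm_le_l1_cart)
  finally show ?thesis .
qed

lemma entry_le: "\<bar>A$i$j\<bar> \<le> norm (A *v axis j (1::real))"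
proof -
  have "A$i$j = (A *v axis j 1) $ i"
    by (simp add: matrix_vector_mult_def axis_def if_distrib if_distribR sum.delta cong: if_cong)
  then show ?thesis by (metis component_le_norm_cart)
qed

lemma matpow_norm_bound:
  assumes K: "K \<ge> 0" "\<And>v. norm (M *v v) \<le> K * norm v"
  shows "norm (matpow (M::real^'k::finite^'k) n) \<le> real (CARD('k))^2 * K ^ n"
proof -
  have "norm (matpow M n) \<le> (\<Sum>i\<in>(UNIV::'k set). \<Sum>j\<in>(UNIV::'k set). K ^ n)"
  proof (rule order_trans[OF norm_mat_le], intro sum_mono)
    fix i j :: 'k
    have "\<bar>matpow M n $ i $ j\<bar> \<le> norm (matpow M n *v axis j (1::real))" by (rule entry_le)
    also have "\<dots> \<le> K ^ n * norm (axis j (1::real))" by (rule matpow_bound[OF K])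
    finally show "\<bar>matpow M n $ i $ j\<bar> \<le> K ^ n" by simp
  qed
  also have "\<dots> = real (CARD('k))^2 * K ^ n" by (simp add: power2_eq_square)
  finally show ?thesis .
qed

lemma mexp_summable: "summable (\<lambda>k. (1 / fact k) *\<^sub>R matpow (M::real^'k::finite^'k) k)"
proof -
  obtain K where K: "K > 0" "\<And>v. norm (M *v v) \<le> K * norm v" using matvec_bound[of M] by blast
  have s: "summable (\<lambda>k. real (CARD('k))^2 * (inverse (fact k) * K ^ k))"
    by (intro summable_mult summable_exp)
  show ?thesis
  proof (rule summable_comparison_test'[OF s])
    fix n :: nat
    have "norm ((1 / fact n) *\<^sub>R matpow M n) = (1 / fact n) * norm (matpow M n)" by simp
    also have "\<dots> \<le> (1 / fact n) * (real (CARD('k))^2 * K ^ n)"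
      using K by (intro mult_left_mono matpow_norm_bound) auto
    finally show "norm ((1 / fact n) *\<^sub>R matpow M n) \<le> real (CARD('k))^2 * (inverse (fact n) * K ^ n)"
      by (simp add: field_simps)
  qed
qed

lemma mexp_sums: "(\<lambda>k. (1 / fact k) *\<^sub>R matpow M k) sums mexp M"
  unfolding mexp_def by (rule summable_sums[OF mexp_summable])

lemma linear_matvec_left: fixes v :: "real^'k::finite" shows "bounded_linear (\<lambda>A::real^'k::finite^'j::finite. A *v v)"
proof -
  have "linear (\<lambda>A::real^'k::finite^'j::finite. A *v v)"
    by (rule linearI) (simp_all add: matrix_vector_mult_add_rdistrib scaleR_matrix_vector_assoc)
  then show ?thesis by (simp add: linear_conv_bounded_linear)
qed

lemma mexp_apply_sums: "(\<lambda>k. (1 / fact k) *\<^sub>R (matpow M k *v v)) sums (mexp M *v v)"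
  using bounded_linear.sums[OF linear_matvec_left[of v] mexp_sums[of M]]
  by (simp add: scaleR_matrix_vector_assoc)

lemma matpow_fix: "M *v v = 0 \<Longrightarrow> matpow M n *v v = (if n = 0 then v else 0)"
  by (induction n) (auto simp: matrix_vector_mul_assoc[symmetric])

lemma mexp_fix:
  assumes "M *v v = 0" shows "mexp M *v v = v"
proof -
  have "(\<lambda>k. (1 / fact k) *\<^sub>R (matpow M k *v v)) = (\<lambda>k. if k = 0 then v else 0)"
    using matpow_fix[OF assms] by auto
  moreover have "(\<lambda>k::nat. if k = 0 then v else 0) sums v"
    using sums_single[of 0 "\<lambda>_. v"] by simp
  ultimately show ?thesis using mexp_apply_sums[of M v] sums_unique2 by metis
qed

lemma matpow_commute: "M ** matpow M n = matpow M n ** M"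
  by (induction n) (simp_all add: matrix_mul_assoc)

lemma transpose_matpow: "transpose (matpow M n) = matpow (transpose M) n"
  by (induction n) (simp_all add: matrix_transpose_mul matpow_commute)

lemma mexp_transpose: "transpose (mexp M) = mexp (transpose M)"
proof -
  have bl: "bounded_linear (transpose :: real^'k::finite^'k \<Rightarrow> _)"
  proof -
    have "linear (transpose :: real^'k::finite^'k \<Rightarrow> _)"
      by (rule linearI) (simp_all add: transpose_def vec_eq_iff)
    then show ?thesis by (simp add: linear_conv_bounded_linear)
  qed
  have t_scale: "transpose (c *\<^sub>R A) = c *\<^sub>R transpose A" for c and A :: "real^'k^'k"
    by (simp add: transpose_def vec_eq_iff)
  from bounded_linear.sums[OF bl mexp_sums, of M]
  have "(\<lambda>k. (1 / fact k) *\<^sub>R matpow (transpose M) k) sums transpose (mexp M)"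
    by (simp add: t_scale transpose_matpow)
  then show ?thesis using mexp_sums[of "transpose M"] sums_unique2 by metis
qed

lemma scale_mmul: "((a::real) *\<^sub>R A) ** (b *\<^sub>R B) = (a*b) *\<^sub>R ((A::real^'k::finite^'j::finite) ** (B::real^'l::finite^'k))"
  by (simp add: vec_eq_iff matrix_matrix_mult_def sum_distrib_left mult_ac)

lemma matpow_scale: "matpow (s *\<^sub>R N) n = s^n *\<^sub>R matpow N n"
proof (induction n)
  case 0 then show ?case by simp
next
  case (Suc n)
  have "matpow (s *\<^sub>R N) (Suc n) = (s *\<^sub>R N) ** (s^n *\<^sub>R matpow N n)" by (simp add: Suc)
  also have "\<dots> = s^(Suc n) *\<^sub>R matpow N (Suc n)" by (simp add: scale_mmul)
  finally show ?case .
qed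

lemma vec_deriv:
  fixes f :: "real \<Rightarrow> real^'k::finite"
  assumes "\<And>p. ((\<lambda>t. f t $ p) has_real_derivative (f' $ p)) (at s)"
  shows "(f has_vector_derivative f') (at s)"
  unfolding has_vector_derivative_def
proof (subst has_derivative_componentwise_within, intro ballI)
  fix i :: "real^'k" assume "i \<in> Basis"
  then obtain p where i: "i = axis p 1" using axis_inverse by blast
  have "((\<lambda>t. f t $ p) has_derivative (\<lambda>h. h * f' $ p)) (at s)"
  proof -
    have e: "(\<lambda>h. h * f' $ p) = (*) (f' $ p)" by (auto simp: fun_eq_iff mult.commute)
    show ?thesis using assms[of p] unfolding e by (simp add: has_field_derivative_def)
  qed
  then show "((\<lambda>x. f x \<bullet> i) has_derivative (\<lambda>x. (x *\<^sub>R f') \<bullet> i)) (at s)"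
    by (simp add: i cart_eq_inner_axis[symmetric])
qed

lemma mexp_deriv:
  fixes N :: "real^'k::finite^'k"
  shows "((\<lambda>s. mexp (s *\<^sub>R N) *v v) has_vector_derivative (N *v (mexp (s *\<^sub>R N) *v v))) (at s)"
proof (rule vec_deriv)
  fix p :: 'k
  define y where "y s = mexp (s *\<^sub>R N) *v v" for s
  define c where "c n = (matpow N n *v v) $ p / fact n" for n
  have ysums: "(\<lambda>n. (s^n / fact n) *\<^sub>R (matpow N n *v v)) sums y s" for s
    using mexp_apply_sums[of "s *\<^sub>R N" v]
    by (simp add: y_def matpow_scale scaleR_matrix_vector_assoc[symmetric] divide_inverse mult.commute)
  have csums: "(\<lambda>n. c n * s^n) sums (y s $ p)" for s
    using bounded_linear.sums[OF bounded_linear_vec_nth[of p] ysums[of s]]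
    by (simp add: c_def field_simps)
  obtain K where K: "K > 0" "\<And>u. norm (N *v u) \<le> K * norm u" using matvec_bound[of N] by blast
  have csum: "summable (\<lambda>n. c n * z^n)" for z
  proof (rule summable_comparison_test'[OF summable_mult[OF summable_exp[of "K * \<bar>z\<bar>"], of "norm v"]])
    fix n :: nat
    have "norm (c n * z^n) = \<bar>(matpow N n *v v) $ p\<bar> / fact n * \<bar>z\<bar>^n"
      by (simp add: c_def abs_mult power_abs)
    also have "\<dots> \<le> (K^n * norm v) / fact n * \<bar>z\<bar>^n"
      using order_trans[OF component_le_norm_cart matpow_bound[of K N n v]] K
      by (intro mult_right_mono divide_right_mono) auto
    also have "\<dots> = norm v * (inverse (fact n) * (K * \<bar>z\<bar>)^n)"
      by (simp add: field_simps power_mult_distrib)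
    finally show "norm (c n * z^n) \<le> norm v * (inverse (fact n) * (K * \<bar>z\<bar>)^n)" .
  qed
  have yfun: "(\<lambda>s. y s $ p) = (\<lambda>x. \<Sum>n. c n * x^n)"
    using csums by (auto simp: sums_iff)
  have D: "((\<lambda>x. \<Sum>n. c n * x^n) has_field_derivative (\<Sum>n. diffs c n * s^n)) (at s)"
    by (rule termdiffs_strong_converges_everywhere) (rule csum)
  have dsums: "(\<lambda>n. diffs c n * s^n) sums ((N *v y s) $ p)"
  proof -
    have bl: "bounded_linear (\<lambda>u. (N *v u) $ p)"
      using bounded_linear_compose[OF bounded_linear_vec_nth[of p] matrix_vector_mul_bounded_linear[of N]] by (simp add: o_def)
    have "diffs c n * s^n = (N *v ((s^n / fact n) *\<^sub>R (matpow N n *v v))) $ p" for n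
    proof -
      define X where "X = (N *v (matpow N n *v v)) $ p"
      have "diffs c n = real (Suc n) * (X / (real (Suc n) * fact n))"
        unfolding diffs_def c_def X_def
        by (simp only: matpow_vec_Suc fact_Suc of_nat_mult)
      also have "\<dots> = X / fact n" by (simp del: of_nat_Suc)
      finally have "diffs c n = (N *v (matpow N n *v v)) $ p / fact n" by (simp add: X_def)
      then show ?thesis by (simp add: matrix_vector_mult_scaleR field_simps)
    qed
    then show ?thesis using bounded_linear.sums[OF bl ysums[of s]] by simp
  qed
  show "((\<lambda>s. (mexp (s *\<^sub>R N) *v v) $ p) has_real_derivative (N *v (mexp (s *\<^sub>R N) *v v)) $ p) (at s)"
    using D dsums yfun unfolding y_def by (simp add: sums_iff)
qed

lemma ode_decay:
  fixes M :: "real^'k::finite^'k" and z :: "real \<Rightarrow> real^'k"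
  assumes ab: "a \<le> b" and pos: "\<And>u. 0 \<le> u \<bullet> (M *v u)" and cont: "continuous_on {a..b} z"
    and der: "\<And>t. a < t \<Longrightarrow> t < b \<Longrightarrow> (z has_vector_derivative - (M *v z t)) (at t)"
  shows "norm (z b) \<le> norm (z a)"
proof -
  define g where "g t = z t \<bullet> z t" for t
  have "g b \<le> g a"
  proof (rule DERIV_nonpos_imp_decreasing_open[OF ab])
    fix t assume t: "a < t" "t < b"
    have d: "(z has_derivative (\<lambda>h. h *\<^sub>R (- (M *v z t)))) (at t)"
      using der[OF t] by (simp add: has_vector_derivative_def)
    have "(g has_derivative (\<lambda>h. z t \<bullet> (h *\<^sub>R (- (M *v z t))) + (h *\<^sub>R (- (M *v z t))) \<bullet> z t)) (at t)"
      unfolding g_def by (rule has_derivative_inner[OF d d])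
    moreover have "(\<lambda>h. z t \<bullet> (h *\<^sub>R (- (M *v z t))) + (h *\<^sub>R (- (M *v z t))) \<bullet> z t) = (*) (- 2 * (z t \<bullet> (M *v z t)))"
      by (rule ext) (simp add: inner_commute[of "M *v z t" "z t"] algebra_simps)
    ultimately have "(g has_real_derivative (- 2 * (z t \<bullet> (M *v z t)))) (at t)"
      by (simp add: has_field_derivative_def)
    moreover have "- 2 * (z t \<bullet> (M *v z t)) \<le> 0" using pos[of "z t"] by simp
    ultimately show "\<exists>y. (g has_real_derivative y) (at t) \<and> y \<le> 0" by blast
  next
    show "continuous_on {a..b} g" unfolding g_def using cont by (intro continuous_on_inner) auto
  qed
  then have "norm (z b)^2 \<le> norm (z a)^2" by (simp add: g_def power2_norm_eq_inner)
  then show ?thesis by (rule power2_le_imp_le) simp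
qed

lemma ode_decay_mid:
  fixes M :: "real^'k::finite^'k" and z :: "real \<Rightarrow> real^'k"
  assumes ab: "a \<le> t" "t \<le> b" and pos: "\<And>u. 0 \<le> u \<bullet> (M *v u)" and cont: "continuous_on {a..b} z"
    and der: "\<And>t. a < t \<Longrightarrow> t < b \<Longrightarrow> (z has_vector_derivative - (M *v z t)) (at t)"
  shows "norm (z t) \<le> norm (z a)"
  by (rule ode_decay[OF ab(1) pos continuous_on_subset[OF cont]]) (use ab der in auto)

lemma ode_solution:
  fixes M :: "real^'k::finite^'k" and x :: "real \<Rightarrow> real^'k"
  assumes ab: "a \<le> b" and pos: "\<And>u. 0 \<le> u \<bullet> (M *v u)" and cont: "continuous_on {a..b} x"
    and der: "\<And>t. a < t \<Longrightarrow> t < b \<Longrightarrow> (x has_vector_derivative - (M *v x t)) (at t)"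
  shows "x b = mexp (- ((b - a) *\<^sub>R M)) *v x a"
proof -
  define Y where "Y s = mexp (s *\<^sub>R (- M)) *v x a" for s
  define y where "y t = Y (t - a)" for t
  have yd: "(y has_vector_derivative - (M *v y t)) (at t)" for t
  proof -
    have sh: "((\<lambda>t. t - a) has_vector_derivative 1) (at t)"
      using has_vector_derivative_diff[OF has_vector_derivative_id[of "at t"] has_vector_derivative_const[of a "at t"]] by simp
    have "((Y \<circ> (\<lambda>t. t - a)) has_vector_derivative (1 *\<^sub>R ((- M) *v Y (t - a)))) (at t)"
      by (rule vector_diff_chain_at[OF sh]) (unfold Y_def, rule mexp_deriv)
    then show ?thesis by (simp add: y_def[abs_def] o_def matvec_neg)
  qed
  define z where "z t = x t - y t" for t
  have ycont: "continuous_on {a..b} y"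
    by (intro continuous_at_imp_continuous_on ballI has_vector_derivative_continuous[OF yd])
  have zcont: "continuous_on {a..b} z" unfolding z_def by (intro continuous_on_diff cont ycont)
  have zd: "(z has_vector_derivative - (M *v z t)) (at t)" if "a < t" "t < b" for t
  proof -
    have "(z has_vector_derivative (- (M *v x t) - - (M *v y t))) (at t)"
      unfolding z_def by (rule has_vector_derivative_diff[OF der[OF that] yd])
    then show ?thesis by (simp add: z_def matrix_vector_mult_diff_distrib)
  qed
  have "y a = x a" by (simp add: y_def Y_def mexp_fix)
  then have za: "z a = 0" by (simp add: z_def)
  have "norm (z b) \<le> norm (z a)" by (rule ode_decay[OF ab pos zcont zd])
  then have "z b = 0" using za by simp
  then show ?thesis by (simp add: z_def y_def Y_def)
qed

definition pC :: "real^'k::finite^'j::finite \<Rightarrow> real poly^'k^'j" where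
  "pC M = (\<chi> i j. [:M$i$j:])"

lemma pconst_sum': "(\<Sum>x\<in>A. [:f x:]) = [:sum f A:]"
  by (induction A rule: infinite_finite_induct) (simp_all add: add_pCons)

lemma pconst_sum: "[:sum f A:] = (\<Sum>x\<in>A. [:f x:])"
  by (rule pconst_sum'[symmetric])

lemma pC_mult: "pC (A ** B) = pC A ** pC B"
  by (simp add: pC_def vec_eq_iff matrix_matrix_mult_def pconst_sum mult_to_poly ac_simps)

lemma pC_one: "pC (mat 1 :: real^'k::finite^'k) = mat 1"
  by (simp add: pC_def vec_eq_iff mat_def one_pCons)

lemma charpoly_alt: "charpoly G = det (mat [:0,1:] - pC G)"
  unfolding charpoly_def pC_def mat_def by (rule arg_cong[where f=det]) (simp add: vec_eq_iff)

lemma mmul_sub_left: "(A::'a::ring_1^'k::finite^'j::finite) ** (B - C) = A ** B - A ** C"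
  by (simp add: vec_eq_iff matrix_matrix_mult_def sum_subtractf algebra_simps)

lemma mmul_sub_right: "((B::'a::ring_1^'k::finite^'j::finite) - C) ** A = B ** A - C ** A"
  by (simp add: vec_eq_iff matrix_matrix_mult_def sum_subtractf algebra_simps)

lemma mat_scalar_commute: "(A::'a::comm_ring_1^'k::finite^'k) ** mat x = mat x ** A"
proof -
  have l: "A ** mat x = (\<chi> i j. A$i$j * x)"
    by (simp add: vec_eq_iff matrix_matrix_mult_def mat_def if_distrib if_distribR sum.delta' cong: if_cong)
  have r: "mat x ** A = (\<chi> i j. x * A$i$j)"
    by (simp add: vec_eq_iff matrix_matrix_mult_def mat_def if_distrib if_distribR sum.delta cong: if_cong)
  show ?thesis by (simp add: l r mult.commute)
qed

lemma charpoly_similar: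
  fixes G R Q :: "real^'k::finite^'k"
  assumes RQ: "R ** Q = mat 1"
  shows "charpoly (R ** G ** Q) = charpoly G"
proof -
  let ?X = "mat [:0,1:] :: real poly^'k^'k"
  have "pC R ** (?X - pC G) ** pC Q = ?X ** (pC R ** pC Q) - pC (R ** G ** Q)"
    by (simp add: mmul_sub_left mmul_sub_right pC_mult matrix_mul_assoc mat_scalar_commute)
  also have "\<dots> = ?X - pC (R ** G ** Q)"
    by (simp add: pC_mult[symmetric] RQ pC_one)
  finally have e: "pC R ** (?X - pC G) ** pC Q = ?X - pC (R ** G ** Q)" .
  have "det (pC R) * det (pC Q) = 1"
    using det_mul[of "pC R" "pC Q"] by (simp add: pC_mult[symmetric] RQ pC_one)
  then have "det (?X - pC (R ** G ** Q)) = det (?X - pC G)"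
    by (simp add: e[symmetric] det_mul algebra_simps)
  then show ?thesis by (simp add: charpoly_alt)
qed

lemma mat_entry_axis: "(H *v axis j (1::real)) $ i = H$i$j"
  by (simp add: matrix_vector_mult_def axis_def if_distrib if_distribR sum.delta cong: if_cong)

lemma charpoly_factor:
  fixes H :: "real^'k::finite^'k"
  assumes eig: "\<And>j. j \<in> J \<Longrightarrow> H *v axis j 1 = lam j *\<^sub>R axis j 1"
  shows "(\<Prod>j\<in>J. [:- lam j, 1:]) dvd charpoly H"
proof -
  let ?Z = "mat [:0,1:] - pC H"
  define c where "c i = (if i \<in> J then [:- lam i, 1:] else 1)" for i
  define a where "a i = (if i \<in> J then axis i 1 else transpose ?Z $ i)" for i
  have Hent: "H$k$i = (if k = i then lam i else 0)" if "i \<in> J" for i k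
  proof -
    have "H$k$i = (lam i *\<^sub>R axis i 1) $ k" using eig[OF that] mat_entry_axis[of H i k] by metis
    then show ?thesis by (simp add: axis_def)
  qed
  have tz: "transpose ?Z = (\<chi> i. c i *s a i)"
  proof -
    have "transpose ?Z $ i $ k = (c i *s a i) $ k" for i k
    proof (cases "i \<in> J")
      case True
      have l: "transpose ?Z $ i $ k = (if k = i then [:0,1:] else 0) - [:H$k$i:]"
        by (simp add: transpose_def pC_def mat_def)
      show ?thesis
      proof (cases "k = i")
        case True2: True
        show ?thesis unfolding l using True True2 by (simp add: Hent c_def a_def axis_def)
      next
        case False2: False
        show ?thesis unfolding l using True False2 by (simp add: Hent c_def a_def axis_def)
      qed
    next
      case False
      then show ?thesis by (simp add: c_def a_def)
    qed
    then show ?thesis by (simp add: vec_eq_iff)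
  qed
  have "charpoly H = det (transpose ?Z)" unfolding charpoly_alt det_transpose ..
  also have "\<dots> = prod c UNIV * det (\<chi> i. a i)" unfolding tz by (rule det_rows_mul)
  also have "prod c UNIV = (\<Prod>j\<in>J. [:- lam j, 1:])"
    using prod.inter_restrict[of UNIV "\<lambda>j. [:- lam j, 1:]" J] unfolding c_def by simp
  finally show ?thesis by (metis dvd_triv_left)
qed

lemma poly_det: "poly (det (A :: real poly^'k::finite^'k)) x = det (\<chi> i j. poly (A$i$j) x)"
  by (simp add: det_def poly_sum poly_prod poly_of_int)

lemma poly_charpoly: "poly (charpoly G) x = det (mat x - G)"
proof -
  have "poly (charpoly G) x = det (\<chi> i j. poly ((mat [:0,1:] - pC G)$i$j) x)"
    by (simp add: charpoly_alt poly_det)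
  also have "(\<chi> i j. poly ((mat [:0,1:] - pC G)$i$j) x) = mat x - G"
    by (simp add: vec_eq_iff mat_def pC_def)
  finally show ?thesis .
qed

lemma mat_vec_scalar: "mat c *v (v::real^'k::finite) = c *\<^sub>R v"
  by (simp add: vec_eq_iff mat_def matrix_vector_mult_def if_distrib if_distribR sum.delta sum.delta' cong: if_cong)

lemma charpoly_nonzero: "charpoly (G::real^'k::finite^'k) \<noteq> 0"
proof -
  obtain K where K: "K > 0" "\<And>v. norm (G *v v) \<le> K * norm v" using matvec_bound[of G] by blast
  have inj: "inj ((*v) (mat (K+1) - G))"
  proof -
    have "v = 0" if "(mat (K+1) - G) *v v = 0" for v
    proof -
      have "G *v v = (K+1) *\<^sub>R v"
        using that by (simp add: matrix_vector_mult_diff_rdistrib mat_vec_scalar)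
      then have "(K+1) * norm v \<le> K * norm v" using K(2)[of v] K(1) by simp
      then have "norm v \<le> 0" by (simp add: algebra_simps)
      then show "v = 0" by simp
    qed
    then show ?thesis
      by (intro linear_inj_on_iff_eq_0[THEN iffD2] matrix_vector_mul_linear) auto
  qed
  then have "det (mat (K+1) - G) \<noteq> 0"
    using det_nz_iff_inj[OF matrix_vector_mul_linear[of "mat (K+1) - G"]] unfolding matrix_of_matrix_vector_mul by blast
  then have "poly (charpoly G) (K+1) \<noteq> 0" by (simp add: poly_charpoly)
  then show ?thesis by auto
qed

lemma size_filter_singletons:
  assumes "finite J" "\<And>j. j \<in> J \<Longrightarrow> P (f j)"
  shows "size (filter_mset P (\<Sum>j\<in>J. {#f j#})) = card J"
  using assms by (induction J rule: finite_induct) (auto simp: filter_union_mset)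

lemma subspace_range_mat: "subspace (range ((*v) (Q::real^'k::finite^'j::finite)))"
  unfolding subspace_def
proof (intro conjI ballI allI)
  show "0 \<in> range ((*v) Q)" by (metis matrix_vector_mult_0_right rangeI)
next
  fix x y assume "x \<in> range ((*v) Q)" "y \<in> range ((*v) Q)"
  then obtain a b where "x = Q *v a" "y = Q *v b" by blast
  then show "x + y \<in> range ((*v) Q)" by (metis matrix_vector_right_distrib rangeI)
next
  fix c :: real and x assume "x \<in> range ((*v) Q)"
  then obtain a where "x = Q *v a" by blast
  then show "c *\<^sub>R x \<in> range ((*v) Q)" by (metis matrix_vector_mult_scaleR rangeI)
qed

lemma eig_count:
  fixes G :: "real^'k::finite^'k" and U :: "(real^'k) set"
  assumes ind: "independent U" and eig: "\<And>u. u \<in> U \<Longrightarrow> G *v u = lam u *\<^sub>R u"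
    and gt: "\<And>u. u \<in> U \<Longrightarrow> q < lam u"
  shows "card U \<le> size (filter_mset (\<lambda>r. q < r) (proots (charpoly G)))"
proof -
  obtain B where B: "U \<subseteq> B" "independent B" "UNIV \<subseteq> span B"
    by (rule maximal_independent_subset_extend[OF subset_UNIV ind]) blast
  have finB: "finite B" using independent_bound[OF B(2)] by blast
  have cardB: "card B = CARD('k)"
    using basis_card_eq_dim[of B UNIV] B by (simp add: dim_UNIV)
  obtain \<beta> where bij: "bij_betw \<beta> (UNIV::'k set) B"
    using finite_same_card_bij[of "UNIV::'k set" B] finB cardB by auto
  define Q :: "real^'k^'k" where "Q = (\<chi> i j. \<beta> j $ i)"
  have Qax: "Q *v axis j 1 = \<beta> j" for j
    by (simp add: vec_eq_iff mat_entry_axis Q_def)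
  have "B \<subseteq> range ((*v) Q)"
  proof
    fix b assume "b \<in> B"
    then obtain j where "b = \<beta> j" using bij by (metis bij_betw_imp_surj_on imageE)
    then show "b \<in> range ((*v) Q)" using Qax by (metis rangeI)
  qed
  then have "span B \<subseteq> range ((*v) Q)" by (rule span_minimal[OF _ subspace_range_mat])
  then have "surj ((*v) Q)" using B(3) by blast
  then obtain R where QR: "Q ** R = mat 1" using matrix_right_invertible_surjective by blast
  then have RQ: "R ** Q = mat 1" by (rule matrix_left_right_inverse1)
  define J where "J = {j. \<beta> j \<in> U}"
  define H where "H = R ** G ** Q"
  have Heig: "H *v axis j 1 = lam (\<beta> j) *\<^sub>R axis j 1" if "j \<in> J" for j
  proof -
    have "H *v axis j 1 = R *v (G *v \<beta> j)"
      by (simp add: H_def Qax[symmetric] matrix_vector_mul_assoc matrix_mul_assoc)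
    also have "\<dots> = lam (\<beta> j) *\<^sub>R (R *v (Q *v axis j 1))"
      using eig[of "\<beta> j"] that by (simp add: J_def Qax matrix_vector_mult_scaleR)
    also have "\<dots> = lam (\<beta> j) *\<^sub>R axis j 1" by (simp add: matrix_vector_mul_assoc RQ)
    finally show ?thesis .
  qed
  let ?P = "\<Prod>j\<in>J. [:- lam (\<beta> j), 1:]"
  have "?P dvd charpoly H" by (rule charpoly_factor[OF Heig])
  then have "?P dvd charpoly G" by (simp add: H_def charpoly_similar RQ)
  then obtain r where r: "charpoly G = ?P * r" by (auto simp: dvd_def)
  have nz: "charpoly G \<noteq> 0" by (rule charpoly_nonzero)
  then have Pnz: "?P \<noteq> 0" and rnz: "r \<noteq> 0" using r by auto
  have "proots (charpoly G) = proots ?P + proots r" using r Pnz rnz by (simp add: proots_mult)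
  moreover have "proots ?P = (\<Sum>j\<in>J. {# lam (\<beta> j) #})"
    by (subst proots_prod) (auto simp: proots_linear_factor)
  ultimately have "size (filter_mset (\<lambda>r. q < r) (proots (charpoly G))) \<ge>
      size (filter_mset (\<lambda>r. q < r) (\<Sum>j\<in>J. {# lam (\<beta> j) #}))"
    by (simp add: filter_union_mset)
  moreover have "size (filter_mset (\<lambda>r. q < r) (\<Sum>j\<in>J. {# lam (\<beta> j) #})) = card J"
    by (rule size_filter_singletons) (auto simp: J_def gt)
  moreover have "card J = card U"
  proof -
    have "bij_betw \<beta> J U"
      using bij B(1) unfolding J_def bij_betw_def inj_on_def by auto
    then show ?thesis by (rule bij_betw_same_card)
  qed
  ultimately show ?thesis by simp
qed

lemma mu_gt:
  fixes G :: "real^'k::finite^'k"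
  assumes "m + 1 \<le> size (filter_mset (\<lambda>r. q < r) (proots (charpoly G)))"
  shows "q < mu (m+1) G"
proof (rule ccontr)
  assume nq: "\<not> q < mu (m+1) G"
  define ys where "ys = sorted_list_of_multiset (proots (charpoly G))"
  define xs where "xs = rev ys"
  have sy: "sorted ys" by (simp add: ys_def)
  have mset: "mset xs = proots (charpoly G)" by (simp add: xs_def ys_def)
  have len: "length xs = length ys" by (simp add: xs_def)
  have "length (filter (\<lambda>r. q < r) xs) \<le> m"
  proof -
    have small: "\<not> q < x" if "x \<in> set (drop m xs)" for x
    proof -
      from that obtain i where i0: "i < length (drop m xs)" "drop m xs ! i = x"
        unfolding in_set_conv_nth by blast
      then have i: "i < length xs - m" "x = xs ! (m + i)" by auto
      have mlt: "m < length xs" using i by simp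
      have "x = ys ! (length ys - Suc (m + i))" using i by (simp add: xs_def rev_nth)
      also have "\<dots> \<le> ys ! (length ys - Suc m)"
        using i mlt len by (intro sorted_nth_mono[OF sy]) auto
      also have "\<dots> = xs ! m" using mlt by (simp add: xs_def rev_nth)
      also have "xs ! m = mu (m+1) G" by (simp add: mu_def eigs_desc_def xs_def ys_def)
      finally show ?thesis using nq by simp
    qed
    have "filter (\<lambda>r. q < r) xs = filter (\<lambda>r. q < r) (take m xs) @ filter (\<lambda>r. q < r) (drop m xs)"
      by (metis append_take_drop_id filter_append)
    also have "filter (\<lambda>r. q < r) (drop m xs) = []" using small by (simp add: filter_empty_conv)
    finally have "length (filter (\<lambda>r. q < r) xs) = length (filter (\<lambda>r. q < r) (take m xs))" by simp
    also have "\<dots> \<le> length (take m xs)" by (rule length_filter_le)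
    also have "\<dots> \<le> m" by simp
    finally show ?thesis .
  qed
  moreover have "size (filter_mset (\<lambda>r. q < r) (proots (charpoly G))) = length (filter (\<lambda>r. q < r) xs)"
    by (simp flip: mset mset_filter)
  ultimately show False using assms by simp
qed

lemma cont_quad: "continuous_on K (\<lambda>y. y \<bullet> ((G::real^'k::finite^'k) *v y))"
  by (intro continuous_on_inner continuous_on_id bounded_linear.continuous_on[OF matrix_vector_mul_bounded_linear])

lemma quad_scale: "(c *\<^sub>R y) \<bullet> ((G::real^'k::finite^'k) *v (c *\<^sub>R y)) = c^2 * (y \<bullet> (G *v y))"
  by (simp add: matrix_vector_mult_scaleR power2_eq_square)

lemma rayleigh_eig:
  fixes G :: "real^'k::finite^'k" and S :: "(real^'k) set"
  assumes sym: "transpose G = G" and sub: "subspace S" and inv: "\<And>y. y \<in> S \<Longrightarrow> G *v y \<in> S"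
    and y0: "y0 \<in> S" and gt: "q * (y0 \<bullet> y0) < y0 \<bullet> (G *v y0)"
  shows "\<exists>e lam. e \<in> S \<and> e \<noteq> 0 \<and> G *v e = lam *\<^sub>R e \<and> q < lam"
proof -
  define f where "f y = y \<bullet> (G *v y)" for y
  have y0nz: "y0 \<noteq> 0" using gt by auto
  define K where "K = sphere 0 1 \<inter> S"
  have compK: "compact K" unfolding K_def by (intro compact_Int_closed compact_sphere closed_subspace sub)
  define u0 where "u0 = (1 / norm y0) *\<^sub>R y0"
  have u0K: "u0 \<in> K" using y0 y0nz sub by (simp add: K_def u0_def subspace_scale)
  then have Kne: "K \<noteq> {}" by auto
  obtain e where eK: "e \<in> K" and emax: "\<And>y. y \<in> K \<Longrightarrow> f y \<le> f e"
    using continuous_attains_sup[OF compK Kne cont_quad[of K G]] unfolding f_def by blast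
  define lam where "lam = f e"
  have eS: "e \<in> S" and en: "norm e = 1" using eK by (auto simp: K_def)
  have ee: "e \<bullet> e = 1" using en by (simp add: dot_square_norm)
  have hom: "f z \<le> lam * (z \<bullet> z)" if "z \<in> S" for z
  proof (cases "z = 0")
    case True then show ?thesis by (simp add: f_def)
  next
    case False
    have "(1 / norm z) *\<^sub>R z \<in> K" using that False sub by (simp add: K_def subspace_scale)
    then have "f ((1 / norm z) *\<^sub>R z) \<le> lam" using emax by (simp add: lam_def)
    then have "(1 / norm z)^2 * f z \<le> lam" by (simp only: f_def quad_scale)
    then have "f z \<le> lam * (norm z)^2" using False by (simp add: field_simps)
    then show ?thesis by (simp add: dot_square_norm)
  qed
  have "f u0 = (1 / norm y0)^2 * f y0" unfolding f_def u0_def by (rule quad_scale)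
  also have "\<dots> > q"
  proof -
    have "q * (norm y0)^2 < f y0" using gt by (simp add: f_def dot_square_norm)
    then show ?thesis using y0nz by (simp add: field_simps)
  qed
  finally have qlam: "q < lam" using emax[OF u0K] by (simp add: lam_def)
  define w where "w = G *v e - lam *\<^sub>R e"
  have wS: "w \<in> S" unfolding w_def using inv[OF eS] eS sub by (simp add: subspace_diff subspace_scale)
  have ew: "e \<bullet> w = 0" by (simp add: w_def inner_diff_right ee lam_def f_def)
  have wGe: "w \<bullet> (G *v e) = w \<bullet> w"
  proof -
    have "G *v e = w + lam *\<^sub>R e" by (simp add: w_def)
    then show ?thesis using ew by (simp add: inner_add_right inner_commute)
  qed
  have "w \<bullet> w = 0"
  proof (rule ccontr)
    define c where "c = w \<bullet> w"
    assume "w \<bullet> w \<noteq> 0"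
    then have c0: "c > 0" by (simp add: c_def)
    define D where "D = lam * c - f w"
    have key: "2 * c \<le> t * D" if t0: "t > 0" for t
    proof -
      define z where "z = e + t *\<^sub>R w"
      have zS: "z \<in> S" unfolding z_def using eS wS sub by (simp add: subspace_add subspace_scale)
      have fz: "f z = lam + 2 * t * c + t^2 * f w"
      proof -
        have "f z = f e + t * (e \<bullet> (G *v w)) + t * (w \<bullet> (G *v e)) + t^2 * f w"
          by (simp add: f_def z_def matrix_vector_right_distrib matrix_vector_mult_scaleR inner_add_left
              inner_add_right power2_eq_square algebra_simps)
        also have "e \<bullet> (G *v w) = w \<bullet> (G *v e)" by (rule quad_sym[OF sym])
        finally show ?thesis by (simp add: wGe c_def lam_def)
      qed
      have zz: "z \<bullet> z = 1 + t^2 * c"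
        by (simp add: z_def inner_add_left inner_add_right ee ew inner_commute[of w e] c_def power2_eq_square)
      have "lam + 2 * t * c + t^2 * f w \<le> lam * (1 + t^2 * c)" using hom[OF zS] fz zz by simp
      then have "t * (2 * c) \<le> t * (t * D)" by (simp add: D_def power2_eq_square algebra_simps)
      then show ?thesis using t0 by simp
    qed
    define t where "t = c / (\<bar>D\<bar> + 1)"
    have t0: "t > 0" using c0 by (simp add: t_def add_pos_nonneg)
    have "t * D \<le> t * \<bar>D\<bar>" using t0 by (intro mult_left_mono) auto
    also have "t * \<bar>D\<bar> < c"
    proof -
      have "t * \<bar>D\<bar> = c * (\<bar>D\<bar> / (\<bar>D\<bar> + 1))" by (simp add: t_def)
      also have "\<dots> < c * 1" using c0 by (intro mult_strict_left_mono) auto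
      finally show ?thesis by simp
    qed
    finally have "t * D < c" .
    then show False using key[OF t0] c0 by simp
  qed
  then have "w = 0" by simp
  then have "G *v e = lam *\<^sub>R e" by (simp add: w_def)
  moreover have "e \<noteq> 0" using en by auto
  ultimately show ?thesis using eS qlam by blast
qed


lemma inner_transpose: "u \<bullet> (transpose A *v z) = (A *v u) \<bullet> (z::real^'k::finite)"
proof -
  have "u \<bullet> (transpose A *v z) = (z v* A) \<bullet> u" by (simp add: transpose_matrix_vector inner_commute)
  also have "\<dots> = z \<bullet> (A *v u)" by (rule dot_lmul_matrix)
  finally show ?thesis by (simp add: inner_commute)
qed

lemma contraction:
  fixes Phi :: "real^'k::finite^'k" and w :: "'m::finite \<Rightarrow> real^'k"
  assumes orth: "\<And>c c'. c \<noteq> c' \<Longrightarrow> w c \<bullet> w c' = 0" and nz: "\<And>c. w c \<noteq> 0"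
    and fixP: "\<And>c. Phi *v w c = w c" and fixT: "\<And>c. transpose Phi *v w c = w c"
    and mu: "mu (CARD('m) + 1) (transpose Phi ** Phi) \<le> q" and q1: "q < 1"
    and y: "\<And>c. w c \<bullet> y = 0"
  shows "norm (Phi *v y)^2 \<le> q * norm y^2"
proof (rule ccontr)
  assume "\<not> ?thesis"
  then have gt: "q * norm y^2 < norm (Phi *v y)^2" by simp
  define G where "G = transpose Phi ** Phi"
  have symG: "transpose G = G" by (simp add: G_def matrix_transpose_mul)
  have quadG: "u \<bullet> (G *v u) = norm (Phi *v u)^2" for u
  proof -
    have "u \<bullet> (G *v u) = u \<bullet> (transpose Phi *v (Phi *v u))" unfolding G_def by (simp only: matrix_vector_mul_assoc)
    also have "\<dots> = (Phi *v u) \<bullet> (Phi *v u)" by (rule inner_transpose)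
    finally show ?thesis by (simp add: dot_square_norm)
  qed
  have Gw: "G *v w c = w c" for c
  proof -
    have "G *v w c = transpose Phi *v (Phi *v w c)" unfolding G_def by (simp only: matrix_vector_mul_assoc)
    then show ?thesis by (simp only: fixP fixT)
  qed
  define S where "S = {y. \<forall>c. w c \<bullet> y = 0}"
  have subS: "subspace S"
    unfolding subspace_def S_def by (auto simp: inner_add_right)
  have invS: "G *v u \<in> S" if "u \<in> S" for u
  proof -
    have "w c \<bullet> (G *v u) = 0" for c
      using quad_sym[OF symG, of "w c" u] that by (simp add: Gw S_def inner_commute)
    then show ?thesis by (simp add: S_def)
  qed
  have yS: "y \<in> S" using y by (simp add: S_def)
  have "q * (y \<bullet> y) < y \<bullet> (G *v y)" using gt by (simp add: quadG dot_square_norm)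
  then obtain e lam where e: "e \<in> S" "e \<noteq> 0" "G *v e = lam *\<^sub>R e" "q < lam"
    using rayleigh_eig[OF symG subS invS yS] by blast
  define U where "U = insert e (range w)"
  define lf where "lf u = (if u = e then lam else 1)" for u
  have winj: "inj w"
  proof (rule injI)
    fix c c' assume "w c = w c'"
    show "c = c'"
    proof (rule ccontr)
      assume "c \<noteq> c'"
      then have "w c \<bullet> w c = 0" using orth[of c c'] \<open>w c = w c'\<close> by simp
      then show False using nz[of c] by simp
    qed
  qed
  have enw: "e \<notin> range w"
  proof
    assume "e \<in> range w"
    then obtain c where "e = w c" by blast
    then have "e \<bullet> e = 0" using e(1) by (simp add: S_def)
    then show False using e(2) by simp
  qed
  have cardU: "card U = CARD('m) + 1"
    using enw winj by (simp add: U_def card_image)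
  have indU: "independent U"
  proof (rule pairwise_orthogonal_independent)
    show "pairwise orthogonal U"
      unfolding pairwise_def U_def orthogonal_def
      using e(1) orth by (auto simp: S_def inner_commute) (metis orth)
    show "0 \<notin> U" using e(2) nz by (auto simp: U_def)
  qed
  have "card U \<le> size (filter_mset (\<lambda>r. q < r) (proots (charpoly G)))"
  proof (rule eig_count[OF indU])
    fix u assume "u \<in> U"
    then show "G *v u = lf u *\<^sub>R u" using e(3) enw by (auto simp: U_def lf_def Gw)
    show "q < lf u" using e(4) q1 by (simp add: lf_def)
  qed
  then have "q < mu (CARD('m) + 1) G" using cardU by (intro mu_gt) simp
  then show False using mu by (simp add: G_def)
qed

lemma seg_has_integral:
  fixes f :: "real \<Rightarrow> 'a::banach"
  assumes ab: "a \<le> b" and pc: "\<And>t. a \<le> t \<Longrightarrow> t < b \<Longrightarrow> f t = F"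
  shows "(f has_integral ((b - a) *\<^sub>R F)) {a..b}"
proof (rule has_integral_spike_finite[of "{b}"])
  show "((\<lambda>_. F) has_integral ((b - a) *\<^sub>R F)) {a..b}"
    using has_integral_const_real[of F a b] ab by (simp add: content_real)
  show "\<And>t. t \<in> {a..b} - {b} \<Longrightarrow> f t = F" using pc by auto
qed simp

lemma pw_integrable:
  fixes f :: "real \<Rightarrow> 'a::banach"
  assumes mono: "\<And>k. tk k \<le> tk (Suc k)"
    and pc: "\<And>k t. tk k \<le> t \<Longrightarrow> t < tk (Suc k) \<Longrightarrow> f t = F k"
    and ij: "i \<le> j"
  shows "f integrable_on {tk i..tk j}"
  using ij
proof (induction j rule: dec_induct)
  case base
  then show ?case using integrable_on_refl[of f "tk i"] by simp
next
  case (step j)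
  have ij: "tk i \<le> tk j" by (rule lift_Suc_mono_le[of tk, OF mono step(1)])
  have seg: "f integrable_on {tk j..tk (Suc j)}"
    using seg_has_integral[of "tk j" "tk (Suc j)" f "F j", OF mono pc] by blast
  show ?case by (rule Henstock_Kurzweil_Integration.integrable_combine[OF ij mono[of j] step(3) seg])
qed

lemma lap_null_from_avg:
  fixes Lf :: "real \<Rightarrow> real^'k::finite^'k" and tk :: "nat \<Rightarrow> real" and Lk :: "nat \<Rightarrow> real^'k^'k"
  assumes mono: "\<And>k. tk k < tk (Suc k)"
    and pc: "\<And>k t. tk k \<le> t \<Longrightarrow> t < tk (Suc k) \<Longrightarrow> Lf t = Lk k"
    and pos: "\<And>t u. tk 0 \<le> t \<Longrightarrow> 0 \<le> u \<bullet> (Lf t *v u)"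
    and sym: "\<And>k. transpose (Lk k) = Lk k"
    and ik: "i \<le> k" and kj: "k < j"
    and avg: "avg_lap Lf (tk i) (tk j) *v u = 0"
  shows "Lk k *v u = 0"
proof -
  have mono_le: "\<And>k. tk k \<le> tk (Suc k)" using mono less_imp_le by blast
  have tmono: "tk a \<le> tk b" if "a \<le> b" for a b
    by (rule lift_Suc_mono_le[of tk, OF mono_le that])
  have tsmono: "tk a < tk b" if "a < b" for a b
    by (rule lift_Suc_mono_less[of tk, OF mono that])
  define a where "a = tk i"
  define b where "b = tk j"
  have ab: "a < b" using tsmono[of i j] ik kj by (simp add: a_def b_def)
  have intL: "Lf integrable_on {a..b}" unfolding a_def b_def
    by (rule pw_integrable[of tk Lf Lk, OF mono_le pc]) (use ik kj in auto)
  have "((1 / (b - a)) *\<^sub>R integral {a..b} Lf) *v u = 0"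
    using avg by (simp only: avg_lap_def a_def b_def)
  then have "(1 / (b - a)) *\<^sub>R (integral {a..b} Lf *v u) = 0" by (simp only: scaleR_matrix_vector_assoc)
  moreover have "1 / (b - a) \<noteq> 0" using ab by simp
  ultimately have I0: "integral {a..b} Lf *v u = 0" by (metis scaleR_eq_0_iff)
  define h where "h M = u \<bullet> (M *v u)" for M :: "real^'k^'k"
  have hbl: "bounded_linear h"
    unfolding h_def using bounded_linear_compose[OF bounded_linear_inner_right[of u] linear_matvec_left[of u]]
    by (simp add: o_def)
  define g where "g = h \<circ> Lf"
  have intg: "g integrable_on {a..b}" unfolding g_def by (rule integrable_linear[OF intL hbl])
  have g0: "integral {a..b} g = 0"
    unfolding g_def integral_linear[OF intL hbl] by (simp add: h_def I0)
  have gpos: "\<forall>t\<in>{a..b}. 0 \<le> g t"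
  proof
    fix t assume "t \<in> {a..b}"
    then have "tk 0 \<le> t" using tmono[of 0 i] by (auto simp: a_def)
    then show "0 \<le> g t" by (simp add: g_def h_def pos)
  qed
  define c where "c = u \<bullet> (Lk k *v u)"
  have pk: "0 \<le> v \<bullet> (Lk k *v v)" for v
    using pos[of "tk k" v] pc[of k "tk k"] tmono[of 0 k] mono[of k] by simp
  have seg: "(g has_integral ((tk (Suc k) - tk k) *\<^sub>R c)) {tk k..tk (Suc k)}"
    by (rule seg_has_integral) (use mono[of k] pc in \<open>auto simp: g_def h_def c_def\<close>)
  have sub: "{tk k..tk (Suc k)} \<subseteq> {a..b}"
    using tmono[of i k] tmono[of "Suc k" j] ik kj by (auto simp: a_def b_def)
  have "(tk (Suc k) - tk k) * c \<le> 0"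
    using integral_subset_le[OF sub has_integral_integrable[OF seg] intg gpos] g0
      integral_unique[OF seg] by simp
  then have "c \<le> 0" using mono[of k] by (simp add: mult_le_0_iff)
  then have "c = 0" using pk[of u] by (simp add: c_def)
  then have "u \<bullet> (Lk k *v u) = 0" by (simp add: c_def)
  then show ?thesis by (rule psd_null[OF sym pk])
qed

lemma mexp_T_fix:
  fixes N :: "real^'k::finite^'k"
  assumes "transpose N = N" "N *v w = 0"
  shows "w \<bullet> (mexp N *v v) = w \<bullet> v"
proof -
  have "w \<bullet> (mexp N *v v) = (transpose (mexp N) *v w) \<bullet> v"
    using inner_transpose[of v "mexp N" w] by (simp add: inner_commute)
  also have "transpose (mexp N) *v w = w" using assms by (simp add: mexp_transpose mexp_fix)
  finally show ?thesis .
qed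

lemma sign_diag_apply: "(sign_diag s *v u) $ (i,a) = s i * u $ (i,a)"
proof -
  have "(sign_diag s *v u) $ (i,a) = (\<Sum>q\<in>UNIV. (if (i,a) = q then s (fst (i,a)) else 0) * u $ q)"
    unfolding sign_diag_def matrix_vector_mult_def by simp
  also have "\<dots> = (\<Sum>q\<in>UNIV. if (i,a) = q then s i * u $ q else 0)" by (intro sum.cong) auto
  also have "\<dots> = s i * u $ (i,a)" by (simp add: sum.delta)
  finally show ?thesis .
qed

lemma ones_kron_apply: "((ones_kron M :: real^'c::finite^('n::finite \<times> 'd::finite)) *v y) $ (i,a) = (M *v y) $ a"
  by (simp add: ones_kron_def matrix_vector_mult_def)

lemma ones_kron_vec_apply: "(ones_kron_vec v :: real^('n::finite \<times> 'd::finite)) $ (i,a) = v $ a"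
  by (simp add: ones_kron_vec_def)

lemma transpose_sign_diag: "transpose (sign_diag s) = sign_diag s"
  by (auto simp: sign_diag_def transpose_def vec_eq_iff)

theorem corollary14:
  fixes A :: "real \<Rightarrow> 'n::finite \<Rightarrow> 'n \<Rightarrow> real^'d::finite^'d"
    and tk :: "nat \<Rightarrow> real" and \<alpha> :: real
    and \<Psi> :: "real^'m::finite^'d"
    and s :: "'n \<Rightarrow> real"
    and kl :: "nat \<Rightarrow> nat" and q :: real
    and x :: "real \<Rightarrow> real^('n \<times> 'd)"
  defines "L \<equiv> (\<lambda>t. laplacian (A t))"
      and "Lk \<equiv> (\<lambda>k. laplacian (A (tk k)))"
      and "C \<equiv> (sign_diag s :: real^('n \<times> 'd)^('n \<times> 'd))"
  assumes n_gt1: "CARD('n) \<ge> 2"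
    and sym_blocks: "\<And>t i j. t \<ge> 0 \<Longrightarrow> transpose (A t i j) = A t i j"
    and sym_graph: "\<And>t i j. t \<ge> 0 \<Longrightarrow> A t i j = A t j i"
    and no_loops: "\<And>t i. t \<ge> 0 \<Longrightarrow> A t i i = 0"
    and sign_type: "\<And>i j. (\<forall>t\<ge>0. psd (A t i j)) \<or> (\<forall>t\<ge>0. nsd (A t i j))"
    and t0: "tk 0 = 0"
    and alpha_pos: "\<alpha> > 0"
    and dwell: "\<And>k. tk (Suc k) - tk k \<ge> \<alpha>"
    and tk_inf: "filterlim tk at_top sequentially"
    and piecewise_const: "\<And>k t. tk k \<le> t \<Longrightarrow> t < tk (Suc k) \<Longrightarrow> A t = A (tk k)"
    and Psi_orth: "transpose \<Psi> ** \<Psi> = mat 1"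
    and s_sign: "\<And>i. s i = 1 \<or> s i = -1"
    and kl_mono: "strict_mono kl" and kl0: "kl 0 = 0"
    and q_range: "0 < q" "q < 1"
    and null_cond: "\<And>l. null_space (avg_lap L (tk (kl l)) (tk (kl (Suc l))))
                         = col_space (C ** (ones_kron \<Psi> :: real^'m^('n \<times> 'd)))"
    and contr_cond: "\<And>l. mu (CARD('m) + 1)
            (transpose (Phi Lk tk (kl (Suc l)) (kl l)) ** Phi Lk tk (kl (Suc l)) (kl l)) \<le> q"
    and x_cont: "continuous_on {0..} x"
    and x_ode: "\<And>t. t > 0 \<Longrightarrow> t \<notin> range tk \<Longrightarrow>
                   (x has_vector_derivative (- (L t *v x t))) (at t)"
  shows "(let xstar = C *v ones_kron_vec
                ((1 / real CARD('n)) *\<^sub>R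
                  (\<Psi> *v (transpose (ones_kron \<Psi> :: real^'m^('n \<times> 'd)) *v (C *v x 0))))
          in (x \<longlongrightarrow> xstar) at_top \<and>
             ((\<exists>i j. agent xstar i \<noteq> agent xstar j) \<longrightarrow> bipartite_consensus x))"
proof -
  have tk_step: "tk k < tk (Suc k)" for k using dwell[of k] alpha_pos by linarith
  have tk_le: "tk i \<le> tk j" if "i \<le> j" for i j
    by (rule lift_Suc_mono_le[of tk, OF less_imp_le[OF tk_step] that])
  have tk_less: "tk i < tk j" if "i < j" for i j
    by (rule lift_Suc_mono_less[of tk, OF tk_step that])
  have tk_nonneg: "0 \<le> tk k" for k using tk_le[of 0 k] t0 by simp
  have tk_lin: "real k * \<alpha> \<le> tk k" for k
  proof (induction k)
    case 0 then show ?case using t0 by simp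
  next
    case (Suc k) then show ?case using dwell[of k] by (simp add: algebra_simps)
  qed
  have seg_ex: "\<exists>k. tk k \<le> t \<and> t < tk (Suc k)" if t: "0 \<le> t" for t
  proof -
    define K where "K = {k. tk k \<le> t}"
    have "K \<subseteq> {..nat \<lceil>t / \<alpha>\<rceil>}"
    proof
      fix k assume "k \<in> K"
      then have "real k * \<alpha> \<le> t" using tk_lin[of k] by (simp add: K_def)
      then have "real k \<le> t / \<alpha>" using alpha_pos by (simp add: field_simps)
      then show "k \<in> {..nat \<lceil>t / \<alpha>\<rceil>}" by (simp add: nat_le_iff le_ceiling_iff) linarith
    qed
    then have finK: "finite K" by (rule finite_subset) simp
    have "0 \<in> K" using t t0 by (simp add: K_def)
    define k where "k = Max K"
    have "k \<in> K" unfolding k_def using finK \<open>0 \<in> K\<close> by (intro Max_in) auto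
    moreover have "\<not> tk (Suc k) \<le> t"
    proof
      assume "tk (Suc k) \<le> t"
      then have "Suc k \<in> K" by (simp add: K_def)
      then have "Suc k \<le> k" unfolding k_def using finK by (simp add: Max_ge)
      then show False by simp
    qed
    ultimately show ?thesis by (auto simp: K_def)
  qed
  have L_sym: "transpose (L t) = L t" if "0 \<le> t" for t
    unfolding L_def by (rule lap_sym) (use that sym_blocks sym_graph in auto)
  have L_pos: "0 \<le> u \<bullet> (L t *v u)" if "0 \<le> t" for t u
    unfolding L_def
  proof (rule lap_psd)
    show "\<And>i j. transpose (A t i j) = A t i j" using sym_blocks that by blast
    show "\<And>i j. A t i j = A t j i" using sym_graph that by blast
    show "\<And>i j. psd (A t i j) \<or> nsd (A t i j)" using sign_type that by blast
  qed
  have Lk_L: "Lk k = L (tk k)" for k by (simp add: Lk_def L_def)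
  have Lk_sym: "transpose (Lk k) = Lk k" for k using L_sym[OF tk_nonneg[of k]] by (simp add: Lk_L)
  have Lk_pos: "0 \<le> u \<bullet> (Lk k *v u)" for k u using L_pos[OF tk_nonneg[of k]] by (simp add: Lk_L)
  have L_seg: "L t = Lk k" if "tk k \<le> t" "t < tk (Suc k)" for k t
    using piecewise_const[OF that] by (simp add: L_def Lk_def)
  define B where "B = C ** (ones_kron \<Psi> :: real^'m^('n \<times> 'd))"
  define wv where "wv c = B *v axis c 1" for c
  have B_ent: "B $ (i,a) $ c = s i * \<Psi> $ a $ c" for i a c
  proof -
    have "B $ (i,a) $ c = (C *v ((ones_kron \<Psi> :: real^'m^('n \<times> 'd)) *v axis c 1)) $ (i,a)"
      by (simp add: B_def matrix_vector_mul_assoc mat_entry_axis)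
    also have "\<dots> = s i * \<Psi> $ a $ c"
      by (simp add: C_def sign_diag_apply ones_kron_apply mat_entry_axis ones_kron_def)
    finally show ?thesis .
  qed
  have wv_ent: "wv c $ (i,a) = s i * \<Psi> $ a $ c" for c i a
    by (simp add: wv_def mat_entry_axis B_ent)
  have s2: "s i * s i = 1" for i using s_sign[of i] by auto
  have PsiTP: "(\<Sum>a\<in>UNIV. \<Psi>$a$c * \<Psi>$a$c') = (if c = c' then 1 else 0)" for c c'
  proof -
    have "(transpose \<Psi> ** \<Psi>) $ c $ c' = mat 1 $ c $ c'" using Psi_orth by simp
    then show ?thesis by (simp add: matrix_matrix_mult_def transpose_def mat_def)
  qed
  have wv_orth: "wv c \<bullet> wv c' = real CARD('n) * (if c = c' then 1 else 0)" for c c'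
  proof -
    have "wv c \<bullet> wv c' = (\<Sum>i\<in>UNIV. \<Sum>a\<in>UNIV. (s i * s i) * (\<Psi>$a$c * \<Psi>$a$c'))"
      by (simp add: inner_vec_def sum_pairs wv_ent mult_ac)
    also have "\<dots> = (\<Sum>i\<in>(UNIV::'n set). (if c = c' then 1 else 0))"
      by (simp add: s2 PsiTP)
    finally show ?thesis by simp
  qed
  have B_col: "B $ p $ c = wv c $ p" for p c by (simp add: wv_def mat_entry_axis)
  have wv_B: "wv c \<bullet> (B *v y) = real CARD('n) * y $ c" for c y
  proof -
    have "wv c \<bullet> (B *v y) = (\<Sum>p\<in>UNIV. wv c $ p * (\<Sum>c'\<in>UNIV. wv c' $ p * y $ c'))"
      by (simp add: inner_vec_def matrix_vector_mult_def B_col)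
    also have "\<dots> = (\<Sum>p\<in>UNIV. \<Sum>c'\<in>UNIV. y $ c' * (wv c $ p * wv c' $ p))"
      by (simp add: sum_distrib_left mult_ac)
    also have "\<dots> = (\<Sum>c'\<in>UNIV. y $ c' * (wv c \<bullet> wv c'))"
      by (subst sum.swap) (simp add: inner_vec_def sum_distrib_left)
    also have "\<dots> = (\<Sum>c'\<in>UNIV. if c = c' then real CARD('n) * y $ c' else 0)"
      by (intro sum.cong) (auto simp: wv_orth)
    also have "\<dots> = real CARD('n) * y $ c" by (simp add: sum.delta)
    finally show ?thesis .
  qed
  have n_pos: "0 < real CARD('n)" by simp
  have wv_nz: "wv c \<noteq> 0" for c
  proof
    assume "wv c = 0"
    then have "wv c \<bullet> wv c = 0" by simp
    then show False using wv_orth[of c c] by simp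
  qed
  have kl_seg: "\<exists>l. kl l \<le> k \<and> k < kl (Suc l)" for k
  proof -
    define K where "K = {l. kl l \<le> k}"
    have "K \<subseteq> {..k}" using seq_suble[OF kl_mono] by (auto simp: K_def intro: order_trans)
    then have finK: "finite K" by (rule finite_subset) simp
    have "0 \<in> K" using kl0 by (simp add: K_def)
    define l where "l = Max K"
    have "l \<in> K" unfolding l_def using finK \<open>0 \<in> K\<close> by (intro Max_in) auto
    moreover have "\<not> kl (Suc l) \<le> k"
    proof
      assume "kl (Suc l) \<le> k"
      then have "Suc l \<in> K" by (simp add: K_def)
      then have "Suc l \<le> l" unfolding l_def using finK by (simp add: Max_ge)
      then show False by simp
    qed
    ultimately show ?thesis by (auto simp: K_def)
  qed
  have Lk_null: "Lk k *v (B *v y) = 0" for k y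
  proof -
    obtain l where l: "kl l \<le> k" "k < kl (Suc l)" using kl_seg by blast
    have "B *v y \<in> col_space B" by (simp add: col_space_def)
    then have "B *v y \<in> null_space (avg_lap L (tk (kl l)) (tk (kl (Suc l))))"
      using null_cond[of l] by (simp add: B_def)
    then have avg: "avg_lap L (tk (kl l)) (tk (kl (Suc l))) *v (B *v y) = 0"
      by (simp add: null_space_def)
    show ?thesis
    proof (rule lap_null_from_avg[of tk L Lk "kl l" k "kl (Suc l)" "B *v y"])
      show "\<And>k. tk k < tk (Suc k)" by (rule tk_step)
      show "\<And>k t. tk k \<le> t \<Longrightarrow> t < tk (Suc k) \<Longrightarrow> L t = Lk k" by (rule L_seg)
      show "\<And>t u. tk 0 \<le> t \<Longrightarrow> 0 \<le> u \<bullet> (L t *v u)" using L_pos t0 by simp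
      show "\<And>k. transpose (Lk k) = Lk k" by (rule Lk_sym)
    qed (use l avg in auto)
  qed
  have Lk_wv: "Lk k *v wv c = 0" for k c by (simp add: wv_def Lk_null)
  define z where "z = transpose (ones_kron \<Psi> :: real^'m^('n \<times> 'd)) *v (C *v x 0)"
  define v0 where "v0 = (1 / real CARD('n)) *\<^sub>R (\<Psi> *v z)"
  define xstar where "xstar = C *v (ones_kron_vec v0 :: real^('n \<times> 'd))"
  have xstar_B: "xstar = B *v ((1 / real CARD('n)) *\<^sub>R z)"
  proof -
    have "xstar $ (i,a) = (B *v ((1 / real CARD('n)) *\<^sub>R z)) $ (i,a)" for i a
      by (simp add: xstar_def B_def C_def matrix_vector_mul_assoc[symmetric] sign_diag_apply
          ones_kron_vec_apply ones_kron_apply v0_def matrix_vector_mult_scaleR)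
    then show ?thesis by (simp add: vec_eq_iff)
  qed
  have z_wv: "z $ c = wv c \<bullet> x 0" for c
  proof -
    let ?O = "ones_kron \<Psi> :: real^'m^('n \<times> 'd)"
    have "z $ c = axis c 1 \<bullet> (transpose ?O *v (C *v x 0))" unfolding z_def cart_eq_inner_axis by (rule inner_commute)
    also have "\<dots> = (?O *v axis c 1) \<bullet> (C *v x 0)" by (rule inner_transpose)
    also have "\<dots> = x 0 \<bullet> (transpose C *v (?O *v axis c 1))"
      using inner_transpose[of "x 0" C "?O *v axis c 1"] inner_commute by metis
    also have "transpose C *v (?O *v axis c 1) = wv c"
      by (simp add: C_def transpose_sign_diag wv_def B_def matrix_vector_mul_assoc)
    finally show ?thesis by (simp add: inner_commute)
  qed
  have wv_xstar: "wv c \<bullet> xstar = wv c \<bullet> x 0" for c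
    using n_pos by (simp add: xstar_B wv_B z_wv)
  have Lk_xstar: "Lk k *v xstar = 0" for k by (simp add: xstar_B Lk_null)
  have agent_xstar: "agent xstar i = s i *\<^sub>R v0" for i
    by (simp add: agent_def vec_eq_iff xstar_def C_def sign_diag_apply ones_kron_vec_apply)
  have x_cont_seg: "continuous_on {a..b} x" if "0 \<le> a" for a b
    by (rule continuous_on_subset[OF x_cont]) (use that in auto)
  have x_der_seg: "(x has_vector_derivative - (Lk k *v x t)) (at t)"
    if "tk k < t" "t < tk (Suc k)" for k t
  proof -
    have tpos: "0 < t" using that tk_nonneg[of k] by linarith
    have "t \<notin> range tk"
    proof
      assume "t \<in> range tk"
      then obtain j where j: "t = tk j" by blast
      show False
      proof (cases "j \<le> k")
        case True then show ?thesis using tk_le[of j k] that j by simp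
      next
        case False then have "Suc k \<le> j" by simp
        then show ?thesis using tk_le[of "Suc k" j] that j by simp
      qed
    qed
    then have "(x has_vector_derivative - (L t *v x t)) (at t)" using x_ode tpos by blast
    then show ?thesis using L_seg[of k t] that by simp
  qed
  have x_sol: "x t = mexp (- ((t - tk k) *\<^sub>R Lk k)) *v x (tk k)"
    if "tk k \<le> t" "t \<le> tk (Suc k)" for k t
  proof (rule ode_solution[of "tk k" t "Lk k" x])
    show "tk k \<le> t" by (rule that(1))
    show "\<And>u. 0 \<le> u \<bullet> (Lk k *v u)" by (rule Lk_pos)
    show "continuous_on {tk k..t} x" by (rule x_cont_seg[OF tk_nonneg])
    show "\<And>s. tk k < s \<Longrightarrow> s < t \<Longrightarrow> (x has_vector_derivative - (Lk k *v x s)) (at s)"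
      using x_der_seg that by simp
  qed
  define e where "e t = x t - xstar" for t
  have e_der: "(e has_vector_derivative - (Lk k *v e t)) (at t)"
    if "tk k < t" "t < tk (Suc k)" for k t
  proof -
    have "(e has_vector_derivative (- (Lk k *v x t) - 0)) (at t)"
      unfolding e_def[abs_def] by (rule has_vector_derivative_diff[OF x_der_seg[OF that] has_vector_derivative_const])
    then show ?thesis by (simp add: e_def matrix_vector_mult_diff_distrib Lk_xstar)
  qed
  have e_cont: "continuous_on {a..b} e" if "0 \<le> a" for a b
    unfolding e_def[abs_def] by (intro continuous_on_diff x_cont_seg[OF that] continuous_on_const)
  have e_mid: "norm (e t) \<le> norm (e (tk k))" if "tk k \<le> t" "t \<le> tk (Suc k)" for k t
    by (rule ode_decay_mid[of "tk k" t "tk (Suc k)" "Lk k" e, OF that Lk_pos e_cont[OF tk_nonneg] e_der])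
  have e_step: "e (tk (Suc k)) = mexp (- ((tk (Suc k) - tk k) *\<^sub>R Lk k)) *v e (tk k)" for k
    by (rule ode_solution[of "tk k" "tk (Suc k)" "Lk k" e, OF less_imp_le[OF tk_step] Lk_pos
          e_cont[OF tk_nonneg] e_der])
  have N_sym: "transpose (- (c *\<^sub>R Lk k)) = - (c *\<^sub>R Lk k)" for c k
  proof -
    have "transpose (- (c *\<^sub>R Lk k)) = - (c *\<^sub>R transpose (Lk k))"
      by (simp add: transpose_def vec_eq_iff)
    then show ?thesis by (simp add: Lk_sym)
  qed
  have N_wv: "(- (c *\<^sub>R Lk k)) *v wv c' = 0" for c k c'
    by (simp add: matvec_neg scaleR_matrix_vector_assoc[symmetric] Lk_wv)
  have inv_seg: "wv c \<bullet> x t = wv c \<bullet> x (tk k)" if "tk k \<le> t" "t \<le> tk (Suc k)" for c k t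
    using x_sol[OF that] mexp_T_fix[OF N_sym N_wv] by simp
  have inv_start: "wv c \<bullet> x (tk k) = wv c \<bullet> x 0" for c k
  proof (induction k)
    case 0 then show ?case using t0 by simp
  next
    case (Suc k)
    then show ?case using inv_seg[of k "tk (Suc k)" c] tk_step[of k] by simp
  qed
  have inv: "wv c \<bullet> x t = wv c \<bullet> x 0" if tt: "0 \<le> t" for c t
  proof -
    obtain k where "tk k \<le> t" "t < tk (Suc k)" using seg_ex[OF tt] by blast
    then show ?thesis using inv_seg[of k t c] inv_start[of c k] by simp
  qed
  have e_perp: "wv c \<bullet> e t = 0" if "0 \<le> t" for c t
    using inv[OF that] wv_xstar[of c] by (simp add: e_def inner_diff_right)
  have trans_e: "e (tk (k' + j)) = trans_mat Lk tk k' j *v e (tk k')" for k' j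
  proof (induction j)
    case 0 then show ?case by simp
  next
    case (Suc j)
    have "e (tk (k' + Suc j)) = mexp (- ((tk (k' + j + 1) - tk (k' + j)) *\<^sub>R Lk (k' + j))) *v e (tk (k' + j))"
      using e_step[of "k' + j"] by simp
    also have "\<dots> = mexp (- ((tk (k' + j + 1) - tk (k' + j)) *\<^sub>R Lk (k' + j))) *v (trans_mat Lk tk k' j *v e (tk k'))"
      by (simp only: Suc)
    also have "\<dots> = trans_mat Lk tk k' (Suc j) *v e (tk k')"
      by (simp only: trans_mat.simps matrix_vector_mul_assoc)
    finally show ?case .
  qed
  have trans_fix: "trans_mat Lk tk k' j *v wv c = wv c" for k' j c
  proof (induction j)
    case 0 then show ?case by simp
  next
    case (Suc j)
    then show ?case by (simp add: matrix_vector_mul_assoc[symmetric] mexp_fix N_wv)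
  qed
  have trans_fixT: "transpose (trans_mat Lk tk k' j) *v wv c = wv c" for k' j c
  proof (induction j)
    case 0 then show ?case by (simp only: trans_mat.simps transpose_mat matrix_vector_mul_lid)
  next
    case (Suc j)
    let ?N = "- ((tk (k' + j + 1) - tk (k' + j)) *\<^sub>R Lk (k' + j))"
    have "transpose (trans_mat Lk tk k' (Suc j)) *v wv c
        = transpose (trans_mat Lk tk k' j) *v (transpose (mexp ?N) *v wv c)"
      by (simp only: trans_mat.simps matrix_transpose_mul matrix_vector_mul_assoc)
    also have "transpose (mexp ?N) *v wv c = wv c"
      by (simp only: mexp_transpose N_sym mexp_fix N_wv)
    finally show ?case using Suc by simp
  qed
  have contr: "norm (e (tk (kl (Suc l))))^2 \<le> q * norm (e (tk (kl l)))^2" for l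
  proof -
    define j where "j = kl (Suc l) - kl l"
    have klj: "kl l + j = kl (Suc l)" using strict_monoD[OF kl_mono, of l "Suc l"] by (simp add: j_def)
    have Phi_eq: "Phi Lk tk (kl (Suc l)) (kl l) = trans_mat Lk tk (kl l) j" by (simp add: Phi_def j_def)
    have "e (tk (kl (Suc l))) = trans_mat Lk tk (kl l) j *v e (tk (kl l))"
      using trans_e[of "kl l" j] klj by simp
    moreover have "norm (trans_mat Lk tk (kl l) j *v e (tk (kl l)))^2 \<le> q * norm (e (tk (kl l)))^2"
    proof (rule contraction[of wv])
      show "\<And>c c'. c \<noteq> c' \<Longrightarrow> wv c \<bullet> wv c' = 0" by (simp add: wv_orth)
      show "\<And>c. wv c \<noteq> 0" by (rule wv_nz)
      show "\<And>c. trans_mat Lk tk (kl l) j *v wv c = wv c" by (rule trans_fix)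
      show "\<And>c. transpose (trans_mat Lk tk (kl l) j) *v wv c = wv c" by (rule trans_fixT)
      show "mu (CARD('m) + 1) (transpose (trans_mat Lk tk (kl l) j) ** trans_mat Lk tk (kl l) j) \<le> q"
        using contr_cond[of l] by (simp only: Phi_eq)
      show "q < 1" by (rule q_range(2))
      show "\<And>c. wv c \<bullet> e (tk (kl l)) = 0" by (rule e_perp[OF tk_nonneg])
    qed
    ultimately show ?thesis by simp
  qed
  have geo: "norm (e (tk (kl l)))^2 \<le> q^l * norm (e 0)^2" for l
  proof (induction l)
    case 0 then show ?case using kl0 t0 by simp
  next
    case (Suc l)
    have "norm (e (tk (kl (Suc l))))^2 \<le> q * norm (e (tk (kl l)))^2" by (rule contr)
    also have "\<dots> \<le> q * (q^l * norm (e 0)^2)" using Suc q_range by (intro mult_left_mono) auto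
    finally show ?case by (simp add: mult.assoc)
  qed
  have mono_start: "norm (e (tk k)) \<le> norm (e (tk k0))" if "k0 \<le> k" for k0 k
    using that
  proof (induction k rule: dec_induct)
    case base then show ?case by simp
  next
    case (step k)
    have "norm (e (tk (Suc k))) \<le> norm (e (tk k))"
      by (rule e_mid) (use tk_step[of k] in auto)
    then show ?case using step(3) by simp
  qed
  have bound: "norm (e t) \<le> norm (e (tk (kl l)))" if "tk (kl l) \<le> t" for l t
  proof -
    have "0 \<le> t" using that tk_nonneg[of "kl l"] by linarith
    then obtain k where k: "tk k \<le> t" "t < tk (Suc k)" using seg_ex by blast
    have "kl l \<le> k"
    proof (rule ccontr)
      assume "\<not> kl l \<le> k"
      then have "Suc k \<le> kl l" by simp
      then show False using tk_le[of "Suc k" "kl l"] that k by simp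
    qed
    then show ?thesis using e_mid[of k t] k mono_start[of "kl l" k] by simp
  qed
  have lim: "(x \<longlongrightarrow> xstar) at_top"
  proof (rule tendstoI)
    fix \<epsilon> :: real assume eps: "\<epsilon> > 0"
    have "(\<lambda>l. q^l * norm (e 0)^2) \<longlonglongrightarrow> 0 * norm (e 0)^2"
      using q_range by (intro tendsto_mult LIMSEQ_power_zero tendsto_const) auto
    then have "\<forall>\<^sub>F l in sequentially. q^l * norm (e 0)^2 < \<epsilon>^2"
      using eps by (intro order_tendstoD(2)) auto
    then obtain l where l: "q^l * norm (e 0)^2 < \<epsilon>^2" by (auto simp: eventually_sequentially)
    have "dist (x t) xstar < \<epsilon>" if t: "tk (kl l) \<le> t" for t
    proof -
      have "norm (e t)^2 \<le> norm (e (tk (kl l)))^2"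
        using bound[OF t] norm_ge_zero by (rule power_mono)
      also have "\<dots> \<le> q^l * norm (e 0)^2" by (rule geo)
      also have "\<dots> < \<epsilon>^2" by (rule l)
      finally have "norm (e t)^2 < \<epsilon>^2" .
      then have "norm (e t) < \<epsilon>" using eps by (rule power2_less_imp_less[OF _ less_imp_le])
      then show ?thesis by (simp add: dist_norm e_def)
    qed
    then show "\<forall>\<^sub>F t in at_top. dist (x t) xstar < \<epsilon>"
      unfolding eventually_at_top_linorder by blast
  qed
  have agent_lim: "((\<lambda>t. agent (x t) i) \<longlongrightarrow> agent xstar i) at_top" for i
    unfolding agent_def by (intro tendsto_vec_lambda tendsto_vec_nth lim)
  have Lim_eq: "Lim at_top (\<lambda>t. agent (x t) i) = s i *\<^sub>R v0" for i
    using tendsto_Lim[OF trivial_limit_at_top_linorder agent_lim[of i]] by (simp add: agent_xstar)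
  have bip: "(\<exists>i j. agent xstar i \<noteq> agent xstar j) \<longrightarrow> bipartite_consensus x"
  proof
    assume "\<exists>i j. agent xstar i \<noteq> agent xstar j"
    then obtain i0 j0 where ne: "s i0 *\<^sub>R v0 \<noteq> s j0 *\<^sub>R v0" by (auto simp: agent_xstar)
    then have sne: "s i0 \<noteq> s j0" by auto
    have v0nz: "v0 \<noteq> 0" using ne by auto
    define S where "S = {i. s i = 1}"
    have sS: "s i = (if i \<in> S then 1 else -1)" for i using s_sign[of i] by (auto simp: S_def)
    show "bipartite_consensus x"
      unfolding bipartite_consensus_def
    proof (intro conjI allI exI[of _ S])
      show "\<exists>\<xi>. ((\<lambda>t. agent (x t) i) \<longlongrightarrow> \<xi>) at_top" for i using agent_lim by blast
      show "S \<noteq> {}" using sne s_sign[of i0] s_sign[of j0] by (auto simp: S_def)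
      show "S \<noteq> UNIV"
      proof
        assume "S = UNIV"
        then have "s i0 = 1" "s j0 = 1" by (auto simp: S_def)
        then show False using sne by simp
      qed
      show "(i \<in> S \<longleftrightarrow> j \<in> S) \<longrightarrow> Lim at_top (\<lambda>t. agent (x t) i) = Lim at_top (\<lambda>t. agent (x t) j)" for i j
        by (simp add: Lim_eq sS[of i] sS[of j])
      show "(i \<in> S) \<noteq> (j \<in> S) \<longrightarrow> Lim at_top (\<lambda>t. agent (x t) i) \<noteq> Lim at_top (\<lambda>t. agent (x t) j)" for i j
      proof
        assume d: "(i \<in> S) \<noteq> (j \<in> S)"
        show "Lim at_top (\<lambda>t. agent (x t) i) \<noteq> Lim at_top (\<lambda>t. agent (x t) j)"
        proof
          assume "Lim at_top (\<lambda>t. agent (x t) i) = Lim at_top (\<lambda>t. agent (x t) j)"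
          then have "s i *\<^sub>R v0 = s j *\<^sub>R v0" by (simp add: Lim_eq)
          then have "v0 = - v0" using d by (cases "i \<in> S") (auto simp: sS[of i] sS[of j])
          then have "\<forall>a. v0 $ a = - (v0 $ a)" by (metis vector_uminus_component)
          then have "v0 = 0" by (simp add: vec_eq_iff)
          then show False using v0nz by simp
        qed
      qed
    qed
  qed
  have final: "(x \<longlongrightarrow> xstar) at_top \<and> ((\<exists>i j. agent xstar i \<noteq> agent xstar j) \<longrightarrow> bipartite_consensus x)"
    using lim bip by blast
  show ?thesis using final unfolding Let_def xstar_def v0_def z_def .
qed

end
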